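(* Let $(\mathcal D,h^\star)$ be an active search instance with $h^\star$ non-decreasing, and run the policy $\mathcal A_{\mathrm{ADAP}}$ described in the context. Fix a threshold $t$ with $q_t>0$ and $s_t>0$, let $(a,b)$ be its dyadic pair, and let $s_\star$ be the shell with $(a,b)\in S_{s_\star}$. For every integer $u\ge0$, conditional on the algorithm reaching shell $s_\star+u$, the probability that shell $s_\star+u$ fails to output a verified positive is at most \[ \rho_u=e^{-2^{u+1}}+e^{-2^u}. \]
   Context: An active search instance $(\mathcal D,h^\star)$: $\mathcal D$ a distribution on $\mathbb R$, $h^\star:\mathbb R\to[0,1]$ measurable; each generated candidate has score $R\sim\mathcal D$ and hidden label $V$ with $\Pr(V=1\mid R=r)=h^\star(r)$, candidates i.i.d.; verifying a candidate reveals its label. $q_t=\Pr(R\ge t)$, $s_t=\Pr(R\ge t,V=1)$. The dyadic pair of $t$ is the pair of integers $a,b\ge0$ with $2^{-a-1}<q_t\le2^{-a}$ and $2^{-b}\le s_t<2^{-b+1}$. Costs $c_{\mathrm{rew}},c_{\mathrm{ver}}>0$, $c_{\min}=\min\{c_{\mathrm{rew}},c_{\mathrm{ver}}\}$; shells $S_s=\{(a,b)\in\mathbb Z_{\ge0}^2:a\le b,\ 2^sc_{\min}\le c_{\mathrm{rew}}2^b+c_{\mathrm{ver}}2^{b-a}<2^{s+1}c_{\min}\}$. Policy $\mathcal A_{\mathrm{ADAP}}$: start with empty pool $P$. For $s=0,1,2,\dots$: if $S_s=\emptyset$ skip; otherwise let $b_s^\star=\max\{b:(a,b)\in S_s\}$,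 $j_s^\star=\max\{b-a:(a,b)\in S_s\}$, $m_s=\lceil2^{b_s^\star+1}\rceil$, $k_s=\lceil6\cdot2^{j_s^\star}\rceil$; generate $m_s$ fresh candidates and add them to $P$; order $P$ by non-increasing score, and for $j=1,\dots,\min\{k_s,|P|\}$ verify the $j$-th candidate, remove it from $P$, and return it if its label is $1$. Shell $s$ fails if none of its verifications returns label $1$. *)

theory Defs
  imports "HOL-Probability.Probability"
begin

definition shell :: "real \<Rightarrow> real \<Rightarrow> nat \<Rightarrow> (nat \<times> nat) set" where
  "shell crew cver s = {(a, b). a \<le> b \<and>
     2 ^ s * min crew cver \<le> crew * 2 ^ b + cver * 2 ^ (b - a) \<and>
     crew * 2 ^ b + cver * 2 ^ (b - a) < 2 ^ (s + 1) * min crew cver}"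

definition bstar :: "real \<Rightarrow> real \<Rightarrow> nat \<Rightarrow> nat" where
  "bstar crew cver s = Max (snd ` shell crew cver s)"

definition jstar :: "real \<Rightarrow> real \<Rightarrow> nat \<Rightarrow> nat" where
  "jstar crew cver s = Max ((\<lambda>(a, b). b - a) ` shell crew cver s)"

definition m_gen :: "real \<Rightarrow> real \<Rightarrow> nat \<Rightarrow> nat" where
  "m_gen crew cver s = nat \<lceil>(2::real) ^ (bstar crew cver s + 1)\<rceil>"

definition k_ver :: "real \<Rightarrow> real \<Rightarrow> nat \<Rightarrow> nat" where
  "k_ver crew cver s = nat \<lceil>6 * (2::real) ^ jstar crew cver s\<rceil>"

definition gen_before :: "real \<Rightarrow> real \<Rightarrow> nat \<Rightarrow> nat" where
  "gen_before crew cver s =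
     (\<Sum>s'<s. if shell crew cver s' = {} then 0 else m_gen crew cver s')"

(* Candidates are identified by their generation index i; candidate i has score Rs i.
   Pool before shell s, as a list of candidate indices (only meaningful if all earlier
   shells failed). *)
fun pool_before :: "real \<Rightarrow> real \<Rightarrow> (nat \<Rightarrow> real) \<Rightarrow> nat \<Rightarrow> nat list"
and ordered_pool :: "real \<Rightarrow> real \<Rightarrow> (nat \<Rightarrow> real) \<Rightarrow> nat \<Rightarrow> nat list" where
  "pool_before crew cver Rs 0 = []"
| "pool_before crew cver Rs (Suc s) =
     (if shell crew cver s = {} then pool_before crew cver Rs s
      else drop (k_ver crew cver s) (ordered_pool crew cver Rs s))"
| "ordered_pool crew cver Rs s =
     sort_key (\<lambda>i. - Rs i)
       (pool_before crew cver Rs s @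
        [gen_before crew cver s ..< gen_before crew cver s + m_gen crew cver s])"

definition verified :: "real \<Rightarrow> real \<Rightarrow> (nat \<Rightarrow> real) \<Rightarrow> nat \<Rightarrow> nat list" where
  "verified crew cver Rs s =
     (if shell crew cver s = {} then [] else take (k_ver crew cver s) (ordered_pool crew cver Rs s))"

(* shell s fails: none of its verifications returns label 1 (a skipped shell trivially fails) *)
definition shell_fails :: "real \<Rightarrow> real \<Rightarrow> (nat \<Rightarrow> real) \<Rightarrow> (nat \<Rightarrow> bool) \<Rightarrow> nat \<Rightarrow> bool" where
  "shell_fails crew cver Rs Vs s = (\<forall>i \<in> set (verified crew cver Rs s). \<not> Vs i)"

definition reaches :: "real \<Rightarrow> real \<Rightarrow> (nat \<Rightarrow> real) \<Rightarrow> (nat \<Rightarrow> bool) \<Rightarrow> nat \<Rightarrow> bool" where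
  "reaches crew cver Rs Vs s = (\<forall>s' < s. shell_fails crew cver Rs Vs s')"

end

theory Submission
  imports Defs
begin


lemma insort_key_cong_order:
  assumes "\<forall>a\<in>insert x (set ys). \<forall>b\<in>insert x (set ys). (f a \<le> f b) = (g a \<le> g b)"
  shows "insort_key f x ys = insort_key g x ys"
  using assms by (induction ys) auto

lemma sort_key_cong_order:
  fixes f g :: "'a \<Rightarrow> 'b::linorder"
  assumes "\<forall>a\<in>set xs. \<forall>b\<in>set xs. (f a \<le> f b) = (g a \<le> g b)"
  shows "sort_key f xs = sort_key g xs"
  using assms
proof (induction xs)
  case Nil then show ?case by simp
next
  case (Cons x xs)
  then have "sort_key f xs = sort_key g xs" by simp
  moreover have "insort_key f x (sort_key g xs) = insort_key g x (sort_key g xs)"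
    by (rule insort_key_cong_order) (use Cons.prems in auto)
  ultimately show ?case by simp
qed

lemma gen_before_Suc:
  "gen_before c1 c2 (Suc s) = gen_before c1 c2 s + (if shell c1 c2 s = {} then 0 else m_gen c1 c2 s)"
  by (simp add: gen_before_def)

lemma gen_before_mono: "s \<le> s' \<Longrightarrow> gen_before c1 c2 s \<le> gen_before c1 c2 s'"
  by (induction s' rule: dec_induct) (auto simp: gen_before_Suc)

lemma pool_props:
  "set (pool_before c1 c2 r s) \<subseteq> {..<gen_before c1 c2 s} \<and> distinct (pool_before c1 c2 r s)"
proof (induction s)
  case 0 then show ?case by simp
next
  case (Suc s)
  show ?case
  proof (cases "shell c1 c2 s = {}")
    case True then show ?thesis using Suc by (simp add: gen_before_Suc)
  next
    case False
    have "set (drop (k_ver c1 c2 s) (ordered_pool c1 c2 r s)) \<subseteq> set (ordered_pool c1 c2 r s)"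
      by (rule set_drop_subset)
    moreover have "set (ordered_pool c1 c2 r s) \<subseteq> {..<gen_before c1 c2 (Suc s)}"
      using Suc False by (auto simp: gen_before_Suc)
    moreover have "distinct (ordered_pool c1 c2 r s)"
      using Suc by auto
    ultimately show ?thesis using False by auto
  qed
qed

lemma ordered_set:
  "set (ordered_pool c1 c2 r s) = set (pool_before c1 c2 r s) \<union> {gen_before c1 c2 s..<gen_before c1 c2 s + m_gen c1 c2 s}"
  by simp

lemma ordered_distinct: "distinct (ordered_pool c1 c2 r s)"
  using pool_props[of c1 c2 r s] by auto

definition Aset :: "real \<Rightarrow> real \<Rightarrow> (nat \<Rightarrow> real) \<Rightarrow> nat \<Rightarrow> nat set" where
  "Aset c1 c2 r s = (\<Union>s'<s. set (verified c1 c2 r s'))"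

lemma verified_sub:
  "set (verified c1 c2 r s) \<subseteq> set (pool_before c1 c2 r s) \<union> {gen_before c1 c2 s..<gen_before c1 c2 (Suc s)}"
  unfolding verified_def using set_take_subset[of "k_ver c1 c2 s" "ordered_pool c1 c2 r s"]
  by (auto simp: gen_before_Suc simp del: ordered_pool.simps)
     (auto simp: ordered_set)

lemma Aset_props:
  "Aset c1 c2 r s \<subseteq> {..<gen_before c1 c2 s} \<and> Aset c1 c2 r s \<inter> set (pool_before c1 c2 r s) = {}"
proof (induction s)
  case 0 then show ?case by (simp add: Aset_def)
next
  case (Suc s)
  have AS: "Aset c1 c2 r (Suc s) = Aset c1 c2 r s \<union> set (verified c1 c2 r s)"
    by (auto simp: Aset_def less_Suc_eq)
  show ?case
  proof (cases "shell c1 c2 s = {}")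
    case True then show ?thesis using Suc AS by (simp add: gen_before_Suc verified_def)
  next
    case False
    let ?O = "ordered_pool c1 c2 r s"
    have d: "distinct ?O" by (rule ordered_distinct)
    have v: "set (verified c1 c2 r s) = set (take (k_ver c1 c2 s) ?O)"
      using False by (simp add: verified_def del: ordered_pool.simps)
    have p: "set (pool_before c1 c2 r (Suc s)) = set (drop (k_ver c1 c2 s) ?O)"
      using False by simp
    have disj: "set (take (k_ver c1 c2 s) ?O) \<inter> set (drop (k_ver c1 c2 s) ?O) = {}"
      using set_take_disj_set_drop_if_distinct[OF d] by simp
    have sO: "set ?O \<subseteq> {..<gen_before c1 c2 (Suc s)}"
      using pool_props[of c1 c2 r s] False by (auto simp: gen_before_Suc)
    have AO: "Aset c1 c2 r s \<inter> set ?O = {}"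
      using Suc by (auto simp del: ordered_pool.simps simp: ordered_set)
    have "set (take (k_ver c1 c2 s) ?O) \<subseteq> set ?O" "set (drop (k_ver c1 c2 s) ?O) \<subseteq> set ?O"
      by (rule set_take_subset, rule set_drop_subset)
    moreover have "gen_before c1 c2 s \<le> gen_before c1 c2 (Suc s)" by (simp add: gen_before_Suc)
    ultimately show ?thesis using AS v p disj sO AO Suc
      by (auto simp del: ordered_pool.simps pool_before.simps)
  qed
qed

lemma verified_disj_Aset: "set (verified c1 c2 r s) \<inter> Aset c1 c2 r s = {}"
proof -
  { fix x assume x: "x \<in> set (verified c1 c2 r s)" "x \<in> Aset c1 c2 r s"
    then have "x \<in> set (pool_before c1 c2 r s) \<or> x \<in> {gen_before c1 c2 s..<gen_before c1 c2 (Suc s)}"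
      using verified_sub[of c1 c2 r s] by blast
    then have False using x(2) Aset_props[of c1 c2 r s] by auto }
  then show ?thesis by blast
qed

lemma verified_lt: "set (verified c1 c2 r s) \<subseteq> {..<gen_before c1 c2 (Suc s)}"
proof
  fix x assume x: "x \<in> set (verified c1 c2 r s)"
  then have "x \<in> set (pool_before c1 c2 r s) \<or> x \<in> {gen_before c1 c2 s..<gen_before c1 c2 (Suc s)}"
    using verified_sub[of c1 c2 r s] by blast
  then show "x \<in> {..<gen_before c1 c2 (Suc s)}"
    using pool_props[of c1 c2 r s] gen_before_mono[of s "Suc s" c1 c2] by auto
qed

lemma reaches_iff: "reaches c1 c2 r v s = (\<forall>i\<in>Aset c1 c2 r s. \<not> v i)"
  by (auto simp: reaches_def Aset_def shell_fails_def)

definition samep :: "nat \<Rightarrow> (nat \<Rightarrow> real) \<Rightarrow> (nat \<Rightarrow> real) \<Rightarrow> bool" where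
  "samep N r r' = (\<forall>i<N. \<forall>j<N. (r i \<le> r j) = (r' i \<le> r' j))"

lemma samep_pool:
  assumes "samep N r r'"
  shows "gen_before c1 c2 s \<le> N \<Longrightarrow> pool_before c1 c2 r s = pool_before c1 c2 r' s"
proof (induction s)
  case 0 then show ?case by simp
next
  case (Suc s)
  show ?case
  proof (cases "shell c1 c2 s = {}")
    case True then show ?thesis using Suc by (simp add: gen_before_Suc)
  next
    case False
    then have N: "gen_before c1 c2 s + m_gen c1 c2 s \<le> N" using Suc.prems by (simp add: gen_before_Suc)
    then have eq: "pool_before c1 c2 r s = pool_before c1 c2 r' s" using Suc by simp
    have "set (pool_before c1 c2 r' s @ [gen_before c1 c2 s..<gen_before c1 c2 s + m_gen c1 c2 s]) \<subseteq> {..<N}"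
      using pool_props[of c1 c2 r' s] N by auto
    then have "sort_key (\<lambda>i. - r i) (pool_before c1 c2 r' s @ [gen_before c1 c2 s..<gen_before c1 c2 s + m_gen c1 c2 s])
       = sort_key (\<lambda>i. - r' i) (pool_before c1 c2 r' s @ [gen_before c1 c2 s..<gen_before c1 c2 s + m_gen c1 c2 s])"
      using assms unfolding samep_def
      by (intro sort_key_cong_order) (auto simp del: set_append)
    then show ?thesis using False eq by simp
  qed
qed

lemma samep_verified:
  assumes "samep N r r'" "gen_before c1 c2 (Suc s) \<le> N"
  shows "verified c1 c2 r s = verified c1 c2 r' s"
proof (cases "shell c1 c2 s = {}")
  case True then show ?thesis by (simp add: verified_def)
next
  case False
  then have N: "gen_before c1 c2 s + m_gen c1 c2 s \<le> N" using assms by (simp add: gen_before_Suc)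
  then have eq: "pool_before c1 c2 r s = pool_before c1 c2 r' s"
    using samep_pool[OF assms(1)] by simp
  have "set (pool_before c1 c2 r' s @ [gen_before c1 c2 s..<gen_before c1 c2 s + m_gen c1 c2 s]) \<subseteq> {..<N}"
    using pool_props[of c1 c2 r' s] N by auto
  then have "sort_key (\<lambda>i. - r i) (pool_before c1 c2 r' s @ [gen_before c1 c2 s..<gen_before c1 c2 s + m_gen c1 c2 s])
     = sort_key (\<lambda>i. - r' i) (pool_before c1 c2 r' s @ [gen_before c1 c2 s..<gen_before c1 c2 s + m_gen c1 c2 s])"
    using assms unfolding samep_def
    by (intro sort_key_cong_order) (auto simp del: set_append)
  then show ?thesis using False eq by (simp add: verified_def)
qed

lemma samep_Aset:
  assumes "samep N r r'" "gen_before c1 c2 s \<le> N"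
  shows "Aset c1 c2 r s = Aset c1 c2 r' s"
proof -
  have "verified c1 c2 r s' = verified c1 c2 r' s'" if "s' < s" for s'
    using samep_verified[OF assms(1)] gen_before_mono[of "Suc s'" s c1 c2] that assms(2) by simp
  then show ?thesis by (auto simp: Aset_def)
qed




fun qf :: "real \<Rightarrow> (real \<Rightarrow> real) \<Rightarrow> nat list \<Rightarrow> nat \<Rightarrow> (nat \<Rightarrow> real) \<Rightarrow> real" where
  "qf t h [] k r = 1"
| "qf t h (i # js) k r = (if k = 0 then 1 else if t \<le> r i then (1 - h (r i)) * qf t h js (k - 1) r
     else qf t h js k r)"

lemma qf_hits: "qf t h js k r = prod_list (map (\<lambda>i. 1 - h (r i)) (take k (filter (\<lambda>i. t \<le> r i) js)))"
proof (induction js arbitrary: k)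
  case Nil then show ?case by simp
next
  case (Cons i js)
  then show ?case by (cases k) auto
qed

lemma dominate:
  fixes h :: "real \<Rightarrow> real"
  assumes hm: "mono h" and hr: "\<And>x. 0 \<le> h x \<and> h x \<le> 1"
    and dx: "distinct xs" and dy: "distinct ys" and sub: "set ys \<subseteq> set xs"
  shows "(\<Prod>i\<in>set (take k (sort_key (\<lambda>i. - r i) xs)). 1 - h (r i)) \<le> qf t h ys k r"
proof -
  define L where "L = sort_key (\<lambda>i. - r i) xs"
  define T where "T = set (take k L)"
  define Hl where "Hl = take k (filter (\<lambda>i. t \<le> r i) ys)"
  define H where "H = set Hl"
  define G where "G = (\<lambda>i. 1 - h (r i))"
  have G01: "0 \<le> G i \<and> G i \<le> 1" for i using hr[of "r i"] by (simp add: G_def)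
  have dL: "distinct L" using dx by (simp add: L_def)
  have dHl: "distinct Hl" using dy by (simp add: Hl_def)
  have qfH: "qf t h ys k r = prod G H"
    unfolding qf_hits H_def G_def Hl_def
    using dHl[unfolded Hl_def] by (simp add: prod.distinct_set_conv_list)
  have cH: "card H \<le> k" unfolding H_def using dHl distinct_card[OF dHl] by (simp add: Hl_def)
  have HL: "H \<subseteq> set L"
    using set_take_subset[of k "filter (\<lambda>i. t \<le> r i) ys"] sub by (auto simp: H_def Hl_def L_def)
  have fT: "finite T" and fH: "finite H" by (simp_all add: T_def H_def)
  have sorted: "\<forall>y\<in>T. \<forall>x\<in>set (drop k L). r x \<le> r y"
  proof -
    have "sorted (map (\<lambda>i. - r i) (take k L) @ map (\<lambda>i. - r i) (drop k L))"
      using sorted_sort_key[of "\<lambda>i. - r i" xs] unfolding L_def[symmetric]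
      by (metis append_take_drop_id map_append)
    then show ?thesis unfolding sorted_append T_def by auto
  qed
  have key: "prod G (T - H) \<le> prod G (H - T)"
  proof (cases "H - T = {}")
    case True
    have "prod G (T - H) \<le> 1" using G01 by (intro prod_le_1) auto
    then show ?thesis using True by (metis prod.empty)
  next
    case False
    then obtain x0 where x0: "x0 \<in> H - T" by blast
    have Lsplit: "set L = T \<union> set (drop k L)"
      unfolding T_def by (metis append_take_drop_id set_append)
    have HTd: "H - T \<subseteq> set (drop k L)" using HL Lsplit by blast
    then have "x0 \<in> set (drop k L)" using x0 by blast
    then have "length L > k" by (cases "length L \<le> k") auto
    then have cT: "card T = k" unfolding T_def using distinct_card[of "take k L"] dL by simp
    define c where "c = Min (G ` (H - T))"
    have fin: "finite (G ` (H - T))" using fH by simp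
    have ne: "G ` (H - T) \<noteq> {}" using False by simp
    have c_in: "c \<in> G ` (H - T)" unfolding c_def using Min_in[OF fin ne] .
    have c01: "0 \<le> c \<and> c \<le> 1" using c_in G01 by auto
    have cle: "c \<le> G x" if "x \<in> H - T" for x unfolding c_def using fin that by simp
    have Gle: "G y \<le> c" if "y \<in> T - H" for y
    proof -
      obtain x where x: "x \<in> H - T" "c = G x" using c_in by blast
      have "r x \<le> r y" using sorted HTd x that by blast
      then have "h (r x) \<le> h (r y)" using hm by (simp add: mono_def)
      then show ?thesis using x by (simp add: G_def)
    qed
    have "card (T - H) = card T - card (T \<inter> H)" using fT by (simp add: card_Diff_subset_Int)
    moreover have "card (H - T) = card H - card (H \<inter> T)" using fH by (simp add: card_Diff_subset_Int)
    ultimately have cc: "card (H - T) \<le> card (T - H)" using cT cH by (simp add: Int_commute)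
    have "prod G (T - H) \<le> prod (\<lambda>_. c) (T - H)"
      using G01 Gle by (intro prod_mono) auto
    also have "\<dots> = c ^ card (T - H)" by simp
    also have "\<dots> \<le> c ^ card (H - T)" using c01 cc by (intro power_decreasing) auto
    also have "\<dots> = prod (\<lambda>_. c) (H - T)" by simp
    also have "\<dots> \<le> prod G (H - T)" using c01 cle by (intro prod_mono) auto
    finally show ?thesis .
  qed
  have "prod G T = prod G (T \<inter> H) * prod G (T - H)"
    using fT by (rule prod.Int_Diff)
  also have "\<dots> \<le> prod G (T \<inter> H) * prod G (H - T)"
    using key G01 by (intro mult_left_mono prod_nonneg) auto
  also have "\<dots> = prod G H" using prod.Int_Diff[OF fH, of G T] by (simp add: Int_commute)
  finally show ?thesis unfolding qfH by (simp add: G_def T_def L_def)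
qed

lemma qf_cong: "(\<forall>i\<in>set js. r i = r' i) \<Longrightarrow> qf t h js k r = qf t h js k r'"
  by (induction js arbitrary: k) auto

lemma qf_01: "(\<And>x. 0 \<le> h x \<and> h x \<le> 1) \<Longrightarrow> 0 \<le> qf t h js k r \<and> qf t h js k r \<le> 1"
proof (induction js arbitrary: k)
  case Nil then show ?case by simp
next
  case (Cons i js)
  have a: "0 \<le> 1 - h (r i)" "1 - h (r i) \<le> 1" using Cons.prems[of "r i"] by auto
  have b: "0 \<le> qf t h js (k - 1) r" "qf t h js (k - 1) r \<le> 1" using Cons by auto
  have "(1 - h (r i)) * qf t h js (k - 1) r \<le> 1 * 1"
    using a b by (intro mult_mono) auto
  then show ?case using Cons a b by auto
qed




definition sc :: "(nat \<Rightarrow> real \<times> bool) \<Rightarrow> nat \<Rightarrow> real" where "sc x = (\<lambda>i. fst (x i))"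
definition lb :: "(nat \<Rightarrow> real \<times> bool) \<Rightarrow> nat \<Rightarrow> bool" where "lb x = (\<lambda>i. snd (x i))"

locale asrch = prob_space M for M :: "'w measure" +
  fixes D :: "real measure" and h :: "real \<Rightarrow> real"
    and R :: "nat \<Rightarrow> 'w \<Rightarrow> real" and V :: "nat \<Rightarrow> 'w \<Rightarrow> bool"
  assumes h_meas[measurable]: "h \<in> borel_measurable borel"
    and h_range: "\<And>r. 0 \<le> h r \<and> h r \<le> 1"
    and h_mono: "mono h"
    and indep: "indep_vars (\<lambda>_. borel \<Otimes>\<^sub>M count_space UNIV) (\<lambda>i \<omega>. (R i \<omega>, V i \<omega>)) UNIV"
    and distR: "\<And>i. distr M borel (R i) = D"
    and condV: "\<And>i A. A \<in> sets borel \<Longrightarrow>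
                  measure M {\<omega> \<in> space M. R i \<omega> \<in> A \<and> V i \<omega>} = (LINT r:A|D. h r)"
begin

abbreviation NN :: "(real \<times> bool) measure" where "NN \<equiv> borel \<Otimes>\<^sub>M count_space UNIV"

definition Z :: "nat \<Rightarrow> 'w \<Rightarrow> real \<times> bool" where "Z = (\<lambda>i \<omega>. (R i \<omega>, V i \<omega>))"

definition mu :: "nat \<Rightarrow> (real \<times> bool) measure" where "mu i = distr M NN (Z i)"

lemma Z_meas[measurable]: "Z i \<in> measurable M NN"
  using indep unfolding indep_vars_def Z_def by auto

lemma R_meas[measurable]: "R i \<in> borel_measurable M"
proof -
  have "(\<lambda>\<omega>. fst (Z i \<omega>)) \<in> borel_measurable M" by measurable
  then show ?thesis by (simp add: Z_def)
qed

lemma V_meas[measurable]: "V i \<in> measurable M (count_space UNIV)"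
proof -
  have "(\<lambda>\<omega>. snd (Z i \<omega>)) \<in> measurable M (count_space UNIV)" by measurable
  then show ?thesis by (simp add: Z_def)
qed

lemma sets_D[measurable_cong]: "sets D = sets borel"
  using distR[of 0] by (metis sets_distr)

lemma space_D: "space D = UNIV"
  using distR[of 0] by (metis space_distr space_borel)

lemma D_prob: "prob_space D"
  using distR[of 0] prob_space_distr[OF R_meas[of 0]] by simp

lemma sets_mu: "sets (mu i) = sets NN"
  by (simp add: mu_def)

lemma space_mu: "space (mu i) = UNIV"
  by (simp add: mu_def space_pair_measure)

lemma mu_prob: "prob_space (mu i)"
  unfolding mu_def by (rule prob_space_distr) simp

lemma psf: "product_prob_space mu"
  by (simp add: product_prob_space_def product_prob_space_axioms_def product_sigma_finite_def
     mu_prob prob_space_imp_sigma_finite)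

lemma psf': "product_sigma_finite mu"
  by (simp add: product_sigma_finite_def mu_prob prob_space_imp_sigma_finite)

lemma mu_fst:
  assumes [measurable]: "\<phi> \<in> borel_measurable borel"
  shows "(\<integral>\<^sup>+z. \<phi> (fst z) \<partial>mu i) = (\<integral>\<^sup>+r. \<phi> r \<partial>D)"
proof -
  have "(\<integral>\<^sup>+z. \<phi> (fst z) \<partial>mu i) = (\<integral>\<^sup>+\<omega>. \<phi> (fst (Z i \<omega>)) \<partial>M)"
    unfolding mu_def by (subst nn_integral_distr) auto
  also have "\<dots> = (\<integral>\<^sup>+\<omega>. \<phi> (R i \<omega>) \<partial>M)" by (simp add: Z_def)
  also have "\<dots> = (\<integral>\<^sup>+r. \<phi> r \<partial>distr M borel (R i))"
    by (subst nn_integral_distr) auto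
  finally show ?thesis by (simp add: distR)
qed


lemma neg_integral:
  assumes A: "A \<in> sets borel"
  shows "(\<integral>\<^sup>+r. ennreal (1 - h r) * indicator A r \<partial>D) = ennreal (measure D A - (LINT r:A|D. h r))"
proof -
  interpret D: prob_space D by (rule D_prob)
  have [measurable]: "A \<in> sets D" using A by (simp add: sets_D)
  have int: "integrable D (\<lambda>r. (1 - h r) * indicator A r)"
    by (rule D.integrable_const_bound[where B=1]) (auto simp: h_range abs_le_iff indicator_def
      intro: order_trans[OF _ h_range[THEN conjunct2]])
  have "(\<integral>\<^sup>+r. ennreal (1 - h r) * indicator A r \<partial>D) = (\<integral>\<^sup>+r. ennreal ((1 - h r) * indicator A r) \<partial>D)"
    by (intro nn_integral_cong) (auto simp: indicator_def)
  also have "\<dots> = ennreal (\<integral>r. (1 - h r) * indicator A r \<partial>D)"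
    using int h_range by (intro nn_integral_eq_integral) (auto simp: indicator_def)
  also have "(\<integral>r. (1 - h r) * indicator A r \<partial>D) = (\<integral>r. indicator A r - indicator A r * h r \<partial>D)"
    by (intro Bochner_Integration.integral_cong) (auto simp: algebra_simps)
  also have "\<dots> = (\<integral>r. indicator A r \<partial>D) - (\<integral>r. indicator A r * h r \<partial>D)"
  proof (rule Bochner_Integration.integral_diff)
    show "integrable D (indicator A :: real \<Rightarrow> real)"
      by (rule D.integrable_const_bound[where B=1]) (auto simp: indicator_def)
    show "integrable D (\<lambda>r. indicator A r * h r)"
      by (rule D.integrable_const_bound[where B=1]) (auto simp: indicator_def abs_le_iff h_range
        intro: order_trans[OF _ h_range[THEN conjunct2]] order_trans[OF h_range[THEN conjunct1]])
  qed
  also have "\<dots> = measure D A - (LINT r:A|D. h r)"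
    by (simp add: set_lebesgue_integral_def)
  finally show ?thesis .
qed

lemma neg_measure:
  assumes A: "A \<in> sets borel"
  shows "measure M {\<omega> \<in> space M. R i \<omega> \<in> A \<and> \<not> V i \<omega>} = measure D A - (LINT r:A|D. h r)"
proof -
  have s1[measurable]: "{\<omega> \<in> space M. R i \<omega> \<in> A} \<in> events" using A by measurable
  have s2[measurable]: "{\<omega> \<in> space M. R i \<omega> \<in> A \<and> V i \<omega>} \<in> events" using A by measurable
  have "{\<omega> \<in> space M. R i \<omega> \<in> A \<and> \<not> V i \<omega>} = {\<omega> \<in> space M. R i \<omega> \<in> A} - {\<omega> \<in> space M. R i \<omega> \<in> A \<and> V i \<omega>}"
    by auto
  then have "measure M {\<omega> \<in> space M. R i \<omega> \<in> A \<and> \<not> V i \<omega>} =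
     measure M {\<omega> \<in> space M. R i \<omega> \<in> A} - measure M {\<omega> \<in> space M. R i \<omega> \<in> A \<and> V i \<omega>}"
    by (simp add: finite_measure_Diff s1 s2 subset_eq)
  also have "measure M {\<omega> \<in> space M. R i \<omega> \<in> A} = measure D A"
    using measure_distr[OF R_meas[of i], of A] A distR[of i]
    by (simp add: vimage_def Int_def conj_commute)
  finally show ?thesis using condV[OF A] by simp
qed

lemma distr_neg:
  "distr (density M (indicator {\<omega> \<in> space M. \<not> V i \<omega>})) borel (R i) = density D (\<lambda>r. ennreal (1 - h r))"
proof (rule measure_eqI)
  show "sets (distr (density M (indicator {\<omega> \<in> space M. \<not> V i \<omega>})) borel (R i)) = sets (density D (\<lambda>r. ennreal (1 - h r)))"
    by (simp add: sets_D)
next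
  fix A assume "A \<in> sets (distr (density M (indicator {\<omega> \<in> space M. \<not> V i \<omega>})) borel (R i))"
  then have A[measurable]: "A \<in> sets borel" by simp
  have nv[measurable]: "{\<omega> \<in> space M. \<not> V i \<omega>} \<in> events" by measurable
  have "emeasure (distr (density M (indicator {\<omega> \<in> space M. \<not> V i \<omega>})) borel (R i)) A
      = emeasure (density M (indicator {\<omega> \<in> space M. \<not> V i \<omega>})) (R i -` A \<inter> space M)"
    by (subst emeasure_distr) auto
  also have "\<dots> = (\<integral>\<^sup>+\<omega>. indicator {\<omega> \<in> space M. \<not> V i \<omega>} \<omega> * indicator (R i -` A \<inter> space M) \<omega> \<partial>M)"
    by (subst emeasure_density) auto
  also have "\<dots> = (\<integral>\<^sup>+\<omega>. indicator {\<omega> \<in> space M. R i \<omega> \<in> A \<and> \<not> V i \<omega>} \<omega> \<partial>M)"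
    by (intro nn_integral_cong) (auto simp: indicator_def)
  also have "\<dots> = emeasure M {\<omega> \<in> space M. R i \<omega> \<in> A \<and> \<not> V i \<omega>}"
    by (intro nn_integral_indicator) measurable
  also have "\<dots> = ennreal (measure D A - (LINT r:A|D. h r))"
    by (simp add: emeasure_eq_measure neg_measure[OF A])
  also have "\<dots> = emeasure (density D (\<lambda>r. ennreal (1 - h r))) A"
    by (subst emeasure_density) (auto simp: sets_D neg_integral[OF A])
  finally show "emeasure (distr (density M (indicator {\<omega> \<in> space M. \<not> V i \<omega>})) borel (R i)) A =
      emeasure (density D (\<lambda>r. ennreal (1 - h r))) A" .
qed

lemma label_one:
  assumes [measurable]: "\<phi> \<in> borel_measurable borel"
  shows "(\<integral>\<^sup>+z. \<phi> (fst z) * indicator {z. \<not> snd z} z \<partial>mu i) = (\<integral>\<^sup>+z. \<phi> (fst z) * ennreal (1 - h (fst z)) \<partial>mu i)"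
proof -
  have nv[measurable]: "{\<omega> \<in> space M. \<not> V i \<omega>} \<in> events" by measurable
  have "(\<integral>\<^sup>+z. \<phi> (fst z) * indicator {z. \<not> snd z} z \<partial>mu i)
      = (\<integral>\<^sup>+\<omega>. \<phi> (fst (Z i \<omega>)) * indicator {z. \<not> snd z} (Z i \<omega>) \<partial>M)"
    unfolding mu_def by (subst nn_integral_distr) auto
  also have "\<dots> = (\<integral>\<^sup>+\<omega>. indicator {\<omega> \<in> space M. \<not> V i \<omega>} \<omega> * \<phi> (R i \<omega>) \<partial>M)"
    by (intro nn_integral_cong) (auto simp: Z_def indicator_def)
  also have "\<dots> = (\<integral>\<^sup>+\<omega>. \<phi> (R i \<omega>) \<partial>density M (indicator {\<omega> \<in> space M. \<not> V i \<omega>}))"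
    by (subst nn_integral_density) auto
  also have "\<dots> = (\<integral>\<^sup>+r. \<phi> r \<partial>distr (density M (indicator {\<omega> \<in> space M. \<not> V i \<omega>})) borel (R i))"
    by (subst nn_integral_distr) auto
  also have "\<dots> = (\<integral>\<^sup>+r. \<phi> r \<partial>density D (\<lambda>r. ennreal (1 - h r)))"
    by (simp add: distr_neg)
  also have "\<dots> = (\<integral>\<^sup>+r. ennreal (1 - h r) * \<phi> r \<partial>D)"
    by (subst nn_integral_density) (auto simp: sets_D)
  also have "\<dots> = (\<integral>\<^sup>+z. \<phi> (fst z) * ennreal (1 - h (fst z)) \<partial>mu i)"
    by (subst mu_fst) (auto simp: mult.commute)
  finally show ?thesis .
qed

lemma comp_fst[measurable]: "i \<in> K \<Longrightarrow> (\<lambda>x. fst (x i)) \<in> borel_measurable (PiM K mu)"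
proof -
  assume i: "i \<in> K"
  have "(\<lambda>x. x i) \<in> measurable (PiM K mu) (mu i)" using i by (rule measurable_component_singleton)
  then have "(\<lambda>x. x i) \<in> measurable (PiM K mu) NN" using measurable_cong_sets[OF refl sets_mu[of i], of "PiM K mu"] by simp
  from measurable_compose[OF this measurable_fst] show ?thesis by (simp add: comp_def)
qed

lemma comp_snd[measurable]: "i \<in> K \<Longrightarrow> (\<lambda>x. snd (x i)) \<in> measurable (PiM K mu) (count_space UNIV)"
proof -
  assume i: "i \<in> K"
  have "(\<lambda>x. x i) \<in> measurable (PiM K mu) (mu i)" using i by (rule measurable_component_singleton)
  then have "(\<lambda>x. x i) \<in> measurable (PiM K mu) NN" using measurable_cong_sets[OF refl sets_mu[of i], of "PiM K mu"] by simp
  from measurable_compose[OF this measurable_snd] show ?thesis by (simp add: comp_def)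
qed

lemma pattern_sets:
  assumes NK: "{..<N} \<subseteq> K"
    and inv: "\<And>r r' v v'. samep N r r' \<Longrightarrow> (\<forall>i<N. v i = v' i) \<Longrightarrow> \<Phi> r v = \<Phi> r' v'"
  shows "{x \<in> space (PiM K mu). \<Phi> (sc x) (lb x)} \<in> sets (PiM K mu)"
proof -
  let ?S = "{x \<in> space (PiM K mu). \<Phi> (sc x) (lb x)}"
  define key1 where "key1 x = (\<lambda>p. fst p < N \<and> snd p < N \<and> fst (x (fst p)) \<le> fst (x (snd p)))"
    for x :: "nat \<Rightarrow> real \<times> bool"
  define key2 where "key2 x = (\<lambda>i. i < N \<and> snd (x i))" for x :: "nat \<Rightarrow> real \<times> bool"
  define key where "key x = (key1 x, key2 x)" for x
  define K0 where "K0 = (\<lambda>(A, B). ((\<lambda>p. p \<in> A), (\<lambda>i. i \<in> B))) ` (Pow ({..<N} \<times> {..<N}) \<times> Pow {..<N})"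
  have finK0: "finite K0" unfolding K0_def by simp
  have inK0: "key x \<in> K0" for x
  proof -
    have "key x = (\<lambda>(A, B). ((\<lambda>p. p \<in> A), (\<lambda>i. i \<in> B))) ({p. key1 x p}, {i. key2 x i})"
      by (simp add: key_def)
    moreover have "({p. key1 x p}, {i. key2 x i}) \<in> Pow ({..<N} \<times> {..<N}) \<times> Pow {..<N}"
      by (auto simp: key1_def key2_def)
    ultimately show ?thesis unfolding K0_def by blast
  qed
  have fin: "finite (key ` ?S)" by (rule finite_subset[OF _ finK0]) (auto intro: inK0)
  have eq: "?S = (\<Union>k\<in>key ` ?S. {x \<in> space (PiM K mu). key x = k})"
  proof
    show "?S \<subseteq> (\<Union>k\<in>key ` ?S. {x \<in> space (PiM K mu). key x = k})" by blast
  next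
    show "(\<Union>k\<in>key ` ?S. {x \<in> space (PiM K mu). key x = k}) \<subseteq> ?S"
    proof
      fix x assume "x \<in> (\<Union>k\<in>key ` ?S. {x \<in> space (PiM K mu). key x = k})"
      then obtain y where y: "y \<in> ?S" and x: "x \<in> space (PiM K mu)" "key x = key y" by auto
      have k1: "key1 x = key1 y" and k2: "key2 x = key2 y" using x(2) by (auto simp: key_def)
      have "samep N (sc x) (sc y)" unfolding samep_def
      proof (intro allI impI)
        fix i j assume "i < N" "j < N"
        then show "(sc x i \<le> sc x j) = (sc y i \<le> sc y j)"
          using fun_cong[OF k1, of "(i, j)"] by (simp add: key1_def sc_def)
      qed
      moreover have "\<forall>i<N. lb x i = lb y i"
        using k2 by (auto simp: key2_def lb_def fun_eq_iff)
      ultimately have "\<Phi> (sc x) (lb x) = \<Phi> (sc y) (lb y)" by (rule inv)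
      then show "x \<in> ?S" using x y by simp
    qed
  qed
  have cls: "{x \<in> space (PiM K mu). key x = k} \<in> sets (PiM K mu)" for k
  proof -
    have p1: "Measurable.pred (PiM K mu) (\<lambda>x. key1 x p = fst k p)" for p
    proof (cases "fst p < N \<and> snd p < N")
      case True
      then have pK: "fst p \<in> K" "snd p \<in> K" using NK by auto
      have le: "Measurable.pred (PiM K mu) (\<lambda>x. fst (x (fst p)) \<le> fst (x (snd p)))"
        unfolding pred_def by (rule borel_measurable_le[OF comp_fst[OF pK(1)] comp_fst[OF pK(2)]])
      have "Measurable.pred (PiM K mu) (\<lambda>x. (fst (x (fst p)) \<le> fst (x (snd p))) = fst k p)"
        by (rule pred_intros_logic(6)[OF le]) simp
      moreover have "(\<lambda>x. key1 x p = fst k p) = (\<lambda>x. (fst (x (fst p)) \<le> fst (x (snd p))) = fst k p)"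
        using True unfolding key1_def by blast
      ultimately show ?thesis by metis
    next
      case False
      then have "(\<lambda>x. key1 x p = fst k p) = (\<lambda>x. False = fst k p)"
        unfolding key1_def by blast
      then show ?thesis by (metis measurable_const UNIV_I space_count_space)
    qed
    have p2: "Measurable.pred (PiM K mu) (\<lambda>x. key2 x i = snd k i)" for i
    proof (cases "i < N")
      case True
      then have iK: "i \<in> K" using NK by auto
      have "Measurable.pred (PiM K mu) (\<lambda>x. snd (x i) = snd k i)"
        by (rule pred_intros_logic(6)[OF comp_snd[OF iK]]) simp
      moreover have "(\<lambda>x. key2 x i = snd k i) = (\<lambda>x. snd (x i) = snd k i)"
        using True unfolding key2_def by blast
      ultimately show ?thesis by metis
    next
      case False
      then have "(\<lambda>x. key2 x i = snd k i) = (\<lambda>x. False = snd k i)"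
        unfolding key2_def by blast
      then show ?thesis by (metis measurable_const UNIV_I space_count_space)
    qed
    have a: "Measurable.pred (PiM K mu) (\<lambda>x. \<forall>p. key1 x p = fst k p)"
      by (rule pred_intros_countable(1)) (rule p1)
    have b: "Measurable.pred (PiM K mu) (\<lambda>x. \<forall>i. key2 x i = snd k i)"
      by (rule pred_intros_countable(1)) (rule p2)
    have "{x \<in> space (PiM K mu). key x = k} =
       {x \<in> space (PiM K mu). \<forall>p. key1 x p = fst k p} \<inter> {x \<in> space (PiM K mu). \<forall>i. key2 x i = snd k i}"
      by (auto simp: key_def fun_eq_iff prod_eq_iff)
    then show ?thesis using a b unfolding pred_def by (simp add: sets.Int)
  qed
  show ?thesis
    by (subst eq) (intro sets.finite_UN fin ballI cls)
qed

lemma G_meas: "i \<in> K \<Longrightarrow> (\<lambda>x. 1 - h (fst (x i))) \<in> borel_measurable (PiM K mu)"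
  by (intro borel_measurable_diff borel_measurable_const measurable_compose[OF comp_fst h_meas])

lemma ind_meas: "i \<in> K \<Longrightarrow> (\<lambda>x. if snd (x i) then 0 else 1 :: real) \<in> borel_measurable (PiM K mu)"
proof -
  assume i: "i \<in> K"
  have "(\<lambda>b::bool. if b then 0 else 1 :: real) \<in> measurable (count_space UNIV) borel" by simp
  from measurable_compose[OF comp_snd[OF i] this] show ?thesis .
qed

lemma Gprod_meas: "T \<subseteq> K \<Longrightarrow> (\<lambda>x. ennreal (\<Prod>i\<in>T. 1 - h (fst (x i)))) \<in> borel_measurable (PiM K mu)"
  by (intro measurable_compose[OF _ measurable_ennreal] borel_measurable_prod G_meas) auto

lemma indprod_meas: "T \<subseteq> K \<Longrightarrow> (\<lambda>x. ennreal (\<Prod>i\<in>T. if snd (x i) then 0 else 1)) \<in> borel_measurable (PiM K mu)"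
  by (intro measurable_compose[OF _ measurable_ennreal] borel_measurable_prod ind_meas) auto

lemma pi_insert:
  assumes "finite K" "j \<in> K" "f \<in> borel_measurable (PiM K mu)"
  shows "integral\<^sup>N (PiM K mu) f = (\<integral>\<^sup>+x. (\<integral>\<^sup>+z. f (x(j := z)) \<partial>mu j) \<partial>PiM (K - {j}) mu)"
proof -
  have K: "K = insert j (K - {j})" using assms by auto
  show ?thesis
    using product_sigma_finite.product_nn_integral_insert[OF psf', of "K - {j}" j f] assms K
    by simp
qed

lemma sc_upd: "sc (x(j := z)) = (sc x)(j := fst z)"
  by (auto simp: sc_def fun_eq_iff)

lemma label_elim:
  assumes fK: "finite K" and TK: "T \<subseteq> K"
    and Fm: "(\<lambda>x. F (sc x)) \<in> borel_measurable (PiM K mu)"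
  shows "(\<integral>\<^sup>+x. F (sc x) * ennreal (\<Prod>i\<in>T. if snd (x i) then 0 else 1) \<partial>PiM K mu)
       = (\<integral>\<^sup>+x. F (sc x) * ennreal (\<Prod>i\<in>T. 1 - h (fst (x i))) \<partial>PiM K mu)"
proof -
  have "finite T" using finite_subset[OF TK fK] .
  then show ?thesis using TK Fm
  proof (induction T arbitrary: F rule: finite_induct)
    case empty then show ?case by simp
  next
    case (insert j T)
    have jK: "j \<in> K" and TK': "T \<subseteq> K" using insert.prems by auto
    note Fm = insert.prems(2)
    define F' where "F' r = F r * ennreal (1 - h (r j))" for r
    have F'm: "(\<lambda>x. F' (sc x)) \<in> borel_measurable (PiM K mu)"
      unfolding F'_def sc_def
      using Fm[unfolded sc_def]
      by (intro borel_measurable_times_ennreal measurable_compose[OF _ measurable_ennreal] G_meas jK)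
    have IH: "(\<integral>\<^sup>+x. F' (sc x) * ennreal (\<Prod>i\<in>T. if snd (x i) then 0 else 1) \<partial>PiM K mu)
       = (\<integral>\<^sup>+x. F' (sc x) * ennreal (\<Prod>i\<in>T. 1 - h (fst (x i))) \<partial>PiM K mu)"
      by (rule insert.IH[OF TK' F'm])
    have step: "(\<integral>\<^sup>+x. F (sc x) * ennreal (\<Prod>i\<in>insert j T. if snd (x i) then 0 else 1) \<partial>PiM K mu)
       = (\<integral>\<^sup>+x. F' (sc x) * ennreal (\<Prod>i\<in>T. if snd (x i) then 0 else 1) \<partial>PiM K mu)"
    proof -
      define c where "c x = ennreal (\<Prod>i\<in>T. if snd (x i) then 0 else 1)" for x :: "nat \<Rightarrow> real \<times> bool"
      have cm: "c \<in> borel_measurable (PiM K mu)" unfolding c_def by (rule indprod_meas[OF TK'])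
      have c_upd: "c (x(j := z)) = c x" for x z
        unfolding c_def using insert.hyps(2) by (auto intro!: arg_cong[where f=ennreal] prod.cong)
      have lhs_eq: "F (sc x) * ennreal (\<Prod>i\<in>insert j T. if snd (x i) then 0 else 1)
          = F (sc x) * c x * indicator {z. \<not> snd z} (x j)" for x
        unfolding c_def using insert.hyps
        by (simp add: ennreal_mult'' prod_nonneg indicator_def mult_ac)
      have rhs_eq: "F' (sc x) * c x = F (sc x) * c x * ennreal (1 - h (fst (x j)))" for x
        unfolding F'_def sc_def by (simp add: mult_ac)
      have m1: "(\<lambda>x. F (sc x) * c x * indicator {z. \<not> snd z} (x j)) \<in> borel_measurable (PiM K mu)"
      proof -
        have eqi: "(\<lambda>x. indicator {z. \<not> snd z} (x j) :: ennreal) = (\<lambda>x. ennreal (if snd (x j) then 0 else 1))"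
          by (auto simp: indicator_def fun_eq_iff)
        have im: "(\<lambda>x. indicator {z. \<not> snd z} (x j) :: ennreal) \<in> borel_measurable (PiM K mu)"
          unfolding eqi by (intro measurable_compose[OF _ measurable_ennreal] ind_meas jK)
        show ?thesis by (rule borel_measurable_times_ennreal[OF borel_measurable_times_ennreal[OF Fm cm] im])
      qed
      have m2: "(\<lambda>x. F (sc x) * c x * ennreal (1 - h (fst (x j)))) \<in> borel_measurable (PiM K mu)"
        using Fm cm by (intro borel_measurable_times_ennreal measurable_compose[OF _ measurable_ennreal] G_meas jK)
      have inner: "(\<integral>\<^sup>+z. F (sc (x(j := z))) * c (x(j := z)) * indicator {z. \<not> snd z} ((x(j := z)) j) \<partial>mu j)
          = (\<integral>\<^sup>+z. F (sc (x(j := z))) * c (x(j := z)) * ennreal (1 - h (fst ((x(j := z)) j))) \<partial>mu j)"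
        if x: "x \<in> space (PiM (K - {j}) mu)" for x
      proof -
        define \<phi> where "\<phi> r = F ((sc x)(j := r)) * c x" for r
        have upd: "(\<lambda>v. x(j := v)) \<in> measurable (mu j) (PiM (insert j (K - {j})) mu)"
          using measurable_component_update[OF x, of j] by simp
        then have upd': "(\<lambda>v. x(j := v)) \<in> measurable (mu j) (PiM K mu)"
          using jK by (simp add: insert_absorb)
        have p0: "(\<lambda>r::real. (r, True)) \<in> measurable borel NN" by measurable
        have pair: "(\<lambda>r::real. (r, True)) \<in> measurable borel (mu j)"
          using p0 by (simp only: measurable_cong_sets[OF refl sets_mu[of j], of borel])
        have "(\<lambda>r. F (sc (x(j := (r, True))))) \<in> borel_measurable borel"
          using measurable_compose[OF pair measurable_compose[OF upd' Fm]] by (simp add: comp_def fun_upd_def)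
        then have "(\<lambda>r. F ((sc x)(j := r))) \<in> borel_measurable borel" by (simp add: sc_upd)
        then have \<phi>m: "\<phi> \<in> borel_measurable borel" unfolding \<phi>_def by (intro borel_measurable_times_ennreal) auto
        have "(\<integral>\<^sup>+z. F (sc (x(j := z))) * c (x(j := z)) * indicator {z. \<not> snd z} ((x(j := z)) j) \<partial>mu j)
            = (\<integral>\<^sup>+z. \<phi> (fst z) * indicator {z. \<not> snd z} z \<partial>mu j)"
          by (simp add: \<phi>_def sc_upd c_upd)
        also have "\<dots> = (\<integral>\<^sup>+z. \<phi> (fst z) * ennreal (1 - h (fst z)) \<partial>mu j)"
          by (rule label_one[OF \<phi>m])
        also have "\<dots> = (\<integral>\<^sup>+z. F (sc (x(j := z))) * c (x(j := z)) * ennreal (1 - h (fst ((x(j := z)) j))) \<partial>mu j)"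
          by (simp add: \<phi>_def sc_upd c_upd)
        finally show ?thesis .
      qed
      have "(\<integral>\<^sup>+x. F (sc x) * ennreal (\<Prod>i\<in>insert j T. if snd (x i) then 0 else 1) \<partial>PiM K mu)
          = (\<integral>\<^sup>+x. F (sc x) * c x * indicator {z. \<not> snd z} (x j) \<partial>PiM K mu)"
        by (simp add: lhs_eq)
      also have "\<dots> = (\<integral>\<^sup>+x. (\<integral>\<^sup>+z. F (sc (x(j := z))) * c (x(j := z)) * indicator {z. \<not> snd z} ((x(j := z)) j) \<partial>mu j) \<partial>PiM (K - {j}) mu)"
        by (rule pi_insert[OF fK jK m1])
      also have "\<dots> = (\<integral>\<^sup>+x. (\<integral>\<^sup>+z. F (sc (x(j := z))) * c (x(j := z)) * ennreal (1 - h (fst ((x(j := z)) j))) \<partial>mu j) \<partial>PiM (K - {j}) mu)"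
        by (intro nn_integral_cong inner) simp
      also have "\<dots> = (\<integral>\<^sup>+x. F (sc x) * c x * ennreal (1 - h (fst (x j))) \<partial>PiM K mu)"
        by (rule pi_insert[OF fK jK m2, symmetric])
      also have "\<dots> = (\<integral>\<^sup>+x. F' (sc x) * c x \<partial>PiM K mu)"
        by (simp add: rhs_eq)
      finally show ?thesis by (simp add: c_def)
    qed
    have fin: "(\<integral>\<^sup>+x. F' (sc x) * ennreal (\<Prod>i\<in>T. 1 - h (fst (x i))) \<partial>PiM K mu)
        = (\<integral>\<^sup>+x. F (sc x) * ennreal (\<Prod>i\<in>insert j T. 1 - h (fst (x i))) \<partial>PiM K mu)"
    proof (intro nn_integral_cong)
      fix x :: "nat \<Rightarrow> real \<times> bool"
      have nn: "0 \<le> (\<Prod>i\<in>T. 1 - h (fst (x i)))" "0 \<le> 1 - h (fst (x j))"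
        using h_range by (auto intro!: prod_nonneg simp: algebra_simps)
      show "F' (sc x) * ennreal (\<Prod>i\<in>T. 1 - h (fst (x i))) = F (sc x) * ennreal (\<Prod>i\<in>insert j T. 1 - h (fst (x i)))"
        using insert.hyps nn unfolding F'_def sc_def by (simp add: ennreal_mult mult_ac)
    qed
    show ?case using step IH fin by simp
  qed
qed

lemma sum_sel:
  fixes w :: "'a \<Rightarrow> ennreal"
  assumes "finite A" "a \<in> A"
  shows "(\<Sum>T\<in>A. (if a = T then 1 else 0) * w T) = w a"
proof -
  have "(\<Sum>T\<in>A. (if a = T then 1 else 0) * w T) = (\<Sum>T\<in>A. if a = T then w T else 0)"
    by (intro sum.cong) auto
  also have "\<dots> = w a" using assms by (simp add: sum.delta)
  finally show ?thesis .
qed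

lemma prod_ind: "finite T \<Longrightarrow> (\<Prod>i\<in>T. if P i then 0 else (1::real)) = (if \<forall>i\<in>T. \<not> P i then 1 else 0)"
  by (induction T rule: finite_induct) auto

lemma sel_meas:
  assumes NK: "{..<N} \<subseteq> K" and inv: "\<And>r r'. samep N r r' \<Longrightarrow> S r = S r'"
  shows "(\<lambda>x. if S (sc x) = T then 1 else 0 :: ennreal) \<in> borel_measurable (PiM K mu)"
proof -
  have "{x \<in> space (PiM K mu). (\<lambda>r v. S r = T) (sc x) (lb x)} \<in> sets (PiM K mu)"
    by (rule pattern_sets[OF NK]) (use inv in auto)
  then show ?thesis by (intro measurable_If) auto
qed

lemma setprod_meas:
  assumes NK: "{..<N} \<subseteq> K" and SN: "\<And>r. S r \<subseteq> {..<N}"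
    and inv: "\<And>r r'. samep N r r' \<Longrightarrow> S r = S r'"
  shows "(\<lambda>x. ennreal (\<Prod>i\<in>S (sc x). 1 - h (fst (x i)))) \<in> borel_measurable (PiM K mu)"
proof -
  have eq: "(\<lambda>x. ennreal (\<Prod>i\<in>S (sc x). 1 - h (fst (x i)))) =
     (\<lambda>x. \<Sum>T\<in>Pow {..<N}. (if S (sc x) = T then 1 else 0) * ennreal (\<Prod>i\<in>T. 1 - h (fst (x i))))"
    using SN by (intro ext sum_sel[symmetric]) auto
  show ?thesis unfolding eq
    by (intro borel_measurable_sum borel_measurable_times_ennreal sel_meas[OF NK inv] Gprod_meas)
       (use NK in auto)
qed

lemma label_elim_set:
  assumes fK: "finite K" and NK: "{..<N} \<subseteq> K" and SN: "\<And>r. S r \<subseteq> {..<N}"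
    and inv: "\<And>r r'. samep N r r' \<Longrightarrow> S r = S r'"
  shows "(\<integral>\<^sup>+x. indicator {x \<in> space (PiM K mu). \<forall>i\<in>S (sc x). \<not> snd (x i)} x \<partial>PiM K mu)
       = (\<integral>\<^sup>+x. ennreal (\<Prod>i\<in>S (sc x). 1 - h (fst (x i))) \<partial>PiM K mu)"
proof -
  define F where "F T r = (if S r = T then 1 else 0 :: ennreal)" for T r
  have Fm: "(\<lambda>x. F T (sc x)) \<in> borel_measurable (PiM K mu)" for T
    unfolding F_def by (rule sel_meas[OF NK inv])
  have finS: "finite (S r)" for r using SN finite_subset by blast
  have "(\<integral>\<^sup>+x. indicator {x \<in> space (PiM K mu). \<forall>i\<in>S (sc x). \<not> snd (x i)} x \<partial>PiM K mu)
      = (\<integral>\<^sup>+x. (\<Sum>T\<in>Pow {..<N}. F T (sc x) * ennreal (\<Prod>i\<in>T. if snd (x i) then 0 else 1)) \<partial>PiM K mu)"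
  proof (intro nn_integral_cong)
    fix x assume x: "x \<in> space (PiM K mu)"
    have "(\<Sum>T\<in>Pow {..<N}. F T (sc x) * ennreal (\<Prod>i\<in>T. if snd (x i) then 0 else 1))
        = ennreal (\<Prod>i\<in>S (sc x). if snd (x i) then 0 else 1)"
      unfolding F_def using SN by (intro sum_sel) auto
    also have "\<dots> = indicator {x \<in> space (PiM K mu). \<forall>i\<in>S (sc x). \<not> snd (x i)} x"
      using x by (simp add: prod_ind[OF finS] indicator_def)
    finally show "indicator {x \<in> space (PiM K mu). \<forall>i\<in>S (sc x). \<not> snd (x i)} x =
        (\<Sum>T\<in>Pow {..<N}. F T (sc x) * ennreal (\<Prod>i\<in>T. if snd (x i) then 0 else 1))" by simp
  qed
  also have "\<dots> = (\<Sum>T\<in>Pow {..<N}. \<integral>\<^sup>+x. F T (sc x) * ennreal (\<Prod>i\<in>T. if snd (x i) then 0 else 1) \<partial>PiM K mu)"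
    by (intro nn_integral_sum borel_measurable_times_ennreal Fm indprod_meas) (use NK in auto)
  also have "\<dots> = (\<Sum>T\<in>Pow {..<N}. \<integral>\<^sup>+x. F T (sc x) * ennreal (\<Prod>i\<in>T. 1 - h (fst (x i))) \<partial>PiM K mu)"
    by (intro sum.cong refl label_elim[OF fK _ Fm]) (use NK in auto)
  also have "\<dots> = (\<integral>\<^sup>+x. (\<Sum>T\<in>Pow {..<N}. F T (sc x) * ennreal (\<Prod>i\<in>T. 1 - h (fst (x i)))) \<partial>PiM K mu)"
    by (intro nn_integral_sum[symmetric] borel_measurable_times_ennreal Fm Gprod_meas) (use NK in auto)
  also have "\<dots> = (\<integral>\<^sup>+x. ennreal (\<Prod>i\<in>S (sc x). 1 - h (fst (x i))) \<partial>PiM K mu)"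
    unfolding F_def using SN by (intro nn_integral_cong sum_sel) auto
  finally show ?thesis .
qed

end



context asrch begin

lemma qf_meas: "set js \<subseteq> K \<Longrightarrow> (\<lambda>x. qf t h js k (sc x)) \<in> borel_measurable (PiM K mu)"
proof (induction js arbitrary: k)
  case Nil then show ?case by simp
next
  case (Cons i js)
  then have iK: "i \<in> K" and jK: "set js \<subseteq> K" by auto
  show ?case
  proof (cases "k = 0")
    case True then show ?thesis by simp
  next
    case False
    have le: "{x \<in> space (PiM K mu). t \<le> fst (x i)} \<in> sets (PiM K mu)"
      by (rule borel_measurable_le[OF borel_measurable_const comp_fst[OF iK]])
    have "(\<lambda>x. if t \<le> fst (x i) then (1 - h (fst (x i))) * qf t h js (k - 1) (sc x) else qf t h js k (sc x))
        \<in> borel_measurable (PiM K mu)"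
      by (intro measurable_If le borel_measurable_times G_meas iK Cons.IH jK)
    moreover have "(\<lambda>x. qf t h (i # js) k (sc x)) = (\<lambda>x. if t \<le> fst (x i) then (1 - h (fst (x i))) * qf t h js (k - 1) (sc x) else qf t h js k (sc x))"
      using False by (simp add: sc_def fun_eq_iff)
    ultimately show ?thesis by simp
  qed
qed

lemma one_step:
  assumes a: "0 \<le> a" and b: "0 \<le> b"
  shows "(\<integral>\<^sup>+z. ennreal (if t \<le> fst z then (1 - h (fst z)) * a else b) \<partial>mu j)
    = ennreal (measure D {t..} - (LINT r:{t..}|D. h r)) * ennreal a + ennreal (1 - measure D {t..}) * ennreal b"
proof -
  interpret D: prob_space D by (rule D_prob)
  have m: "(\<lambda>r. ennreal (if t \<le> r then (1 - h r) * a else b)) \<in> borel_measurable borel"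
    by measurable
  have "(\<integral>\<^sup>+z. ennreal (if t \<le> fst z then (1 - h (fst z)) * a else b) \<partial>mu j)
      = (\<integral>\<^sup>+r. ennreal (if t \<le> r then (1 - h r) * a else b) \<partial>D)"
    by (rule mu_fst[OF m])
  also have "\<dots> = (\<integral>\<^sup>+r. ennreal a * (ennreal (1 - h r) * indicator {t..} r) + ennreal b * indicator {..<t} r \<partial>D)"
    using a b h_range by (intro nn_integral_cong) (auto simp: indicator_def ennreal_mult' mult.commute)
  also have "\<dots> = ennreal a * (\<integral>\<^sup>+r. ennreal (1 - h r) * indicator {t..} r \<partial>D) + ennreal b * (\<integral>\<^sup>+r. indicator {..<t} r \<partial>D)"
    by (subst nn_integral_add) (auto simp: nn_integral_cmult sets_D)
  also have "(\<integral>\<^sup>+r. ennreal (1 - h r) * indicator {t..} r \<partial>D) = ennreal (measure D {t..} - (LINT r:{t..}|D. h r))"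
    by (rule neg_integral) simp
  also have "(\<integral>\<^sup>+r. indicator {..<t} r \<partial>D) = ennreal (1 - measure D {t..})"
  proof -
    have s1: "{..<t} \<in> sets D" "{t..} \<in> sets D" by (simp_all add: sets_D)
    have "{..<t} = space D - {t..}" by (auto simp: space_D)
    then have "measure D {..<t} = 1 - measure D {t..}"
      using D.prob_compl[OF s1(2)] by simp
    then show ?thesis using s1 by (simp add: D.emeasure_eq_measure)
  qed
  finally show ?thesis by (simp add: mult.commute)
qed

lemma PiM_prob: "prob_space (PiM K mu)"
  by (intro prob_space_PiM mu_prob)

lemma sI_bounds:
  "0 \<le> (LINT r:{t..}|D. h r) \<and> (LINT r:{t..}|D. h r) \<le> measure D {t..} \<and> measure D {t..} \<le> 1"
proof -
  interpret D: prob_space D by (rule D_prob)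
  have e: "measure M {\<omega> \<in> space M. R 0 \<omega> \<in> {t..} \<and> \<not> V 0 \<omega>} = measure D {t..} - (LINT r:{t..}|D. h r)"
    by (rule neg_measure) simp
  have "0 \<le> measure D {t..} - (LINT r:{t..}|D. h r)" by (metis e measure_nonneg)
  moreover have "0 \<le> (LINT r:{t..}|D. h r)"
  proof -
    have e2: "measure M {\<omega> \<in> space M. R 0 \<omega> \<in> {t..} \<and> V 0 \<omega>} = (LINT r:{t..}|D. h r)"
      by (rule condV) simp
    then show ?thesis by (metis measure_nonneg)
  qed
  ultimately show ?thesis by simp
qed

lemma qf_int:
  assumes qpos: "measure D {t..} > 0"
  shows "distinct js \<Longrightarrow> (\<integral>\<^sup>+x. ennreal (qf t h js k (sc x)) \<partial>PiM (set js) mu)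
     \<le> ennreal ((1 - (LINT r:{t..}|D. h r)) ^ length js + (1 - (LINT r:{t..}|D. h r) / measure D {t..}) ^ k)"
proof (induction js arbitrary: k)
  define q where "q = measure D {t..}"
  define sI where "sI = (LINT r:{t..}|D. h r)"
  have bnds: "0 \<le> sI" "sI \<le> q" "q \<le> 1" "0 < q" using sI_bounds[of t] qpos by (auto simp: q_def sI_def)
  have X0: "0 \<le> 1 - sI" using bnds by simp
  have Y0: "0 \<le> 1 - sI / q" using bnds by (simp add: field_simps)
  {
    case Nil
    have e1: "emeasure (PiM {} mu) (space (PiM {} mu)) = 1"
      by (rule prob_space.emeasure_space_1[OF PiM_prob])
    have "(\<integral>\<^sup>+x. ennreal (qf t h [] k (sc x)) \<partial>PiM (set []) mu) = 1"
      using e1 by simp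
    also have "\<dots> \<le> ennreal ((1 - sI) ^ length [] + (1 - sI / q) ^ k)"
      using Y0 by simp
    finally show ?case by (simp add: q_def sI_def)
  next
    case (Cons y js)
    then have dj: "distinct js" and yj: "y \<notin> set js" by auto
    show ?case
    proof (cases k)
      case 0
      have e1: "emeasure (PiM (set (y # js)) mu) (space (PiM (set (y # js)) mu)) = 1"
        by (rule prob_space.emeasure_space_1[OF PiM_prob])
      have "(\<integral>\<^sup>+x. ennreal (qf t h (y # js) k (sc x)) \<partial>PiM (set (y # js)) mu) = 1"
        using 0 e1 by simp
      also have "\<dots> \<le> ennreal ((1 - sI) ^ length (y # js) + (1 - sI / q) ^ k)"
        using X0 0 by simp
      finally show ?thesis by (simp add: q_def sI_def)
    next
      case (Suc k')
      define A where "A x = qf t h js k' (sc x)" for x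
      define B where "B x = qf t h js (Suc k') (sc x)" for x
      have A01: "0 \<le> A x" and B01: "0 \<le> B x" for x
        using qf_01[OF h_range] by (auto simp: A_def B_def)
      have Am: "(\<lambda>x. ennreal (A x)) \<in> borel_measurable (PiM (set js) mu)"
        unfolding A_def by (intro measurable_compose[OF _ measurable_ennreal] qf_meas) simp
      have Bm: "(\<lambda>x. ennreal (B x)) \<in> borel_measurable (PiM (set js) mu)"
        unfolding B_def by (intro measurable_compose[OF _ measurable_ennreal] qf_meas) simp
      have fm: "(\<lambda>x. ennreal (qf t h (y # js) k (sc x))) \<in> borel_measurable (PiM (set (y # js)) mu)"
        by (intro measurable_compose[OF _ measurable_ennreal] qf_meas) simp
      have Kj: "set (y # js) - {y} = set js" using yj by auto
      have inner: "(\<integral>\<^sup>+z. ennreal (qf t h (y # js) k (sc (x(y := z)))) \<partial>mu y)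
          = ennreal (q - sI) * ennreal (A x) + ennreal (1 - q) * ennreal (B x)" for x
      proof -
        have "qf t h (y # js) k (sc (x(y := z))) = (if t \<le> fst z then (1 - h (fst z)) * A x else B x)" for z
        proof -
          have c: "qf t h js j ((sc x)(y := fst z)) = qf t h js j (sc x)" for j
            using yj by (intro qf_cong) auto
          show ?thesis using Suc by (simp add: sc_upd c A_def B_def)
        qed
        then have "(\<integral>\<^sup>+z. ennreal (qf t h (y # js) k (sc (x(y := z)))) \<partial>mu y)
            = (\<integral>\<^sup>+z. ennreal (if t \<le> fst z then (1 - h (fst z)) * A x else B x) \<partial>mu y)"
          by simp
        also have "\<dots> = ennreal (q - sI) * ennreal (A x) + ennreal (1 - q) * ennreal (B x)"
          unfolding q_def sI_def by (rule one_step[OF A01 B01])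
        finally show ?thesis .
      qed
      have "(\<integral>\<^sup>+x. ennreal (qf t h (y # js) k (sc x)) \<partial>PiM (set (y # js)) mu)
          = (\<integral>\<^sup>+x. (\<integral>\<^sup>+z. ennreal (qf t h (y # js) k (sc (x(y := z)))) \<partial>mu y) \<partial>PiM (set js) mu)"
        using pi_insert[OF _ _ fm, of y] Kj by simp
      also have "\<dots> = (\<integral>\<^sup>+x. ennreal (q - sI) * ennreal (A x) + ennreal (1 - q) * ennreal (B x) \<partial>PiM (set js) mu)"
        by (simp only: inner)
      also have "\<dots> = ennreal (q - sI) * (\<integral>\<^sup>+x. ennreal (A x) \<partial>PiM (set js) mu) + ennreal (1 - q) * (\<integral>\<^sup>+x. ennreal (B x) \<partial>PiM (set js) mu)"
        using Am Bm by (simp add: nn_integral_add nn_integral_cmult)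
      also have "\<dots> \<le> ennreal (q - sI) * ennreal ((1 - sI) ^ length js + (1 - sI / q) ^ k') + ennreal (1 - q) * ennreal ((1 - sI) ^ length js + (1 - sI / q) ^ Suc k')"
        using Cons.IH[OF dj, of k'] Cons.IH[OF dj, of "Suc k'"]
        by (intro add_mono mult_left_mono) (auto simp: A_def B_def q_def sI_def)
      also have "\<dots> = ennreal ((q - sI) * ((1 - sI) ^ length js + (1 - sI / q) ^ k') + (1 - q) * ((1 - sI) ^ length js + (1 - sI / q) ^ Suc k'))"
        using bnds X0 Y0 by (simp add: ennreal_mult)
      also have "(q - sI) * ((1 - sI) ^ length js + (1 - sI / q) ^ k') + (1 - q) * ((1 - sI) ^ length js + (1 - sI / q) ^ Suc k')
          = (1 - sI) ^ length (y # js) + (1 - sI / q) ^ k"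
      proof -
        have h1: "(q - sI) + (1 - q) * (1 - sI / q) = 1 - sI / q" using bnds by (simp add: field_simps)
        have alg: "(a::real) * (u + v) + b * (u + v * y) = u * (a + b) + v * (a + b * y)" for a b u v y
          by (simp add: algebra_simps)
        have "(q - sI) * ((1 - sI) ^ length js + (1 - sI / q) ^ k') + (1 - q) * ((1 - sI) ^ length js + (1 - sI / q) ^ Suc k')
           = (1 - sI) ^ length js * ((q - sI) + (1 - q)) + (1 - sI / q) ^ k' * ((q - sI) + (1 - q) * (1 - sI / q))"
          unfolding power_Suc2 by (rule alg)
        also have "\<dots> = (1 - sI) ^ length js * (1 - sI) + (1 - sI / q) ^ k' * (1 - sI / q)"
          by (simp only: h1) simp
        finally show ?thesis using Suc by (simp only: power_Suc2 length_Cons)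
      qed
      finally show ?thesis by (simp add: q_def sI_def)
    qed
  }
qed

end



context asrch begin

lemma Zr_meas: "(\<lambda>\<omega>. \<lambda>i\<in>K. Z i \<omega>) \<in> measurable M (PiM K mu)"
proof (rule measurable_restrict)
  fix i
  have "measurable M (mu i) = measurable M NN" by (rule measurable_cong_sets[OF refl sets_mu])
  then show "Z i \<in> measurable M (mu i)" using Z_meas by simp
qed

lemma transfer_distr:
  assumes "K \<noteq> {}"
  shows "distr M (PiM K mu) (\<lambda>\<omega>. \<lambda>i\<in>K. Z i \<omega>) = PiM K mu"
proof -
  have ind: "indep_vars (\<lambda>_. NN) Z K"
    using indep_vars_subset[OF indep, of K] by (simp add: Z_def)
  have e: "distr M (PiM K (\<lambda>_. NN)) (\<lambda>\<omega>. \<lambda>i\<in>K. Z i \<omega>) = PiM K (\<lambda>i. distr M NN (Z i))"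
    using indep_vars_iff_distr_eq_PiM[where I=K and M'="\<lambda>_. NN" and X=Z] assms ind Z_meas by simp
  have "distr M (PiM K mu) (\<lambda>\<omega>. \<lambda>i\<in>K. Z i \<omega>) = distr M (PiM K (\<lambda>_. NN)) (\<lambda>\<omega>. \<lambda>i\<in>K. Z i \<omega>)"
    by (rule distr_cong) (auto intro!: sets_PiM_cong simp: sets_mu)
  also have "\<dots> = PiM K mu" using e by (simp add: mu_def[abs_def])
  finally show ?thesis .
qed

lemma event_transfer:
  assumes n: "n > 0"
    and inv: "\<And>r r' v v'. samep n r r' \<Longrightarrow> (\<forall>i<n. v i = v' i) \<Longrightarrow> \<Phi> r v = \<Phi> r' v'"
  shows "measure M {\<omega> \<in> space M. \<Phi> (\<lambda>i. R i \<omega>) (\<lambda>i. V i \<omega>)}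
       = measure (PiM {..<n} mu) {x \<in> space (PiM {..<n} mu). \<Phi> (sc x) (lb x)}"
proof -
  let ?P = "PiM {..<n} mu"
  let ?Zr = "\<lambda>\<omega>. \<lambda>i\<in>{..<n}. Z i \<omega>"
  have A: "{x \<in> space ?P. \<Phi> (sc x) (lb x)} \<in> sets ?P"
    by (rule pattern_sets[OF subset_refl]) (rule inv)
  have ne: "{..<n} \<noteq> {}" using n by auto
  have "measure ?P {x \<in> space ?P. \<Phi> (sc x) (lb x)} = measure (distr M ?P ?Zr) {x \<in> space ?P. \<Phi> (sc x) (lb x)}"
    by (simp add: transfer_distr[OF ne])
  also have "\<dots> = measure M (?Zr -` {x \<in> space ?P. \<Phi> (sc x) (lb x)} \<inter> space M)"
    by (rule measure_distr[OF Zr_meas A])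
  also have "?Zr -` {x \<in> space ?P. \<Phi> (sc x) (lb x)} \<inter> space M = {\<omega> \<in> space M. \<Phi> (\<lambda>i. R i \<omega>) (\<lambda>i. V i \<omega>)}"
  proof (intro set_eqI iffI)
    fix \<omega> assume "\<omega> \<in> ?Zr -` {x \<in> space ?P. \<Phi> (sc x) (lb x)} \<inter> space M"
    then have w: "\<omega> \<in> space M" and p: "\<Phi> (sc (?Zr \<omega>)) (lb (?Zr \<omega>))" by auto
    have "\<Phi> (sc (?Zr \<omega>)) (lb (?Zr \<omega>)) = \<Phi> (\<lambda>i. R i \<omega>) (\<lambda>i. V i \<omega>)"
      by (rule inv) (auto simp: samep_def sc_def lb_def Z_def)
    then show "\<omega> \<in> {\<omega> \<in> space M. \<Phi> (\<lambda>i. R i \<omega>) (\<lambda>i. V i \<omega>)}" using w p by simp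
  next
    fix \<omega> assume "\<omega> \<in> {\<omega> \<in> space M. \<Phi> (\<lambda>i. R i \<omega>) (\<lambda>i. V i \<omega>)}"
    then have w: "\<omega> \<in> space M" and p: "\<Phi> (\<lambda>i. R i \<omega>) (\<lambda>i. V i \<omega>)" by auto
    have sp: "?Zr \<omega> \<in> space ?P" using measurable_space[OF Zr_meas w] .
    have "\<Phi> (sc (?Zr \<omega>)) (lb (?Zr \<omega>)) = \<Phi> (\<lambda>i. R i \<omega>) (\<lambda>i. V i \<omega>)"
      by (rule inv) (auto simp: samep_def sc_def lb_def Z_def)
    then show "\<omega> \<in> ?Zr -` {x \<in> space ?P. \<Phi> (sc x) (lb x)} \<inter> space M" using w p sp by simp
  qed
  finally show ?thesis by simp
qed

lemma main_bound:
  assumes ne: "shell c1 c2 s \<noteq> {}" and qpos: "measure D {t..} > 0"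
  shows "measure M {\<omega> \<in> space M. shell_fails c1 c2 (\<lambda>i. R i \<omega>) (\<lambda>i. V i \<omega>) s \<and> reaches c1 c2 (\<lambda>i. R i \<omega>) (\<lambda>i. V i \<omega>) s}
    \<le> ((1 - (LINT r:{t..}|D. h r)) ^ m_gen c1 c2 s + (1 - (LINT r:{t..}|D. h r) / measure D {t..}) ^ k_ver c1 c2 s)
      * measure M {\<omega> \<in> space M. reaches c1 c2 (\<lambda>i. R i \<omega>) (\<lambda>i. V i \<omega>) s}"
proof -
  define Gb where "Gb = gen_before c1 c2 s"
  define m where "m = m_gen c1 c2 s"
  define n where "n = Gb + m"
  define kk where "kk = k_ver c1 c2 s"
  define Bnd where "Bnd = (1 - (LINT r:{t..}|D. h r)) ^ m + (1 - (LINT r:{t..}|D. h r) / measure D {t..}) ^ kk"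
  have Bnd0: "0 \<le> Bnd"
  proof -
    have b: "0 \<le> (LINT r:{t..}|D. h r)" "(LINT r:{t..}|D. h r) \<le> measure D {t..}" "measure D {t..} \<le> 1"
      using sI_bounds[of t] by auto
    then have "0 \<le> 1 - (LINT r:{t..}|D. h r)" "0 \<le> 1 - (LINT r:{t..}|D. h r) / measure D {t..}"
      using qpos by (auto simp: field_simps)
    then show ?thesis unfolding Bnd_def by simp
  qed
  have nS: "gen_before c1 c2 (Suc s) = n" using ne by (simp add: gen_before_Suc n_def Gb_def m_def)
  have "(0::real) < 2 ^ (bstar c1 c2 s + 1)" by simp
  then have m_pos: "m > 0" unfolding m_def m_gen_def by linarith
  have npos: "n > 0" using m_pos by (simp add: n_def)
  have Gbn: "Gb \<le> n" by (simp add: n_def)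
  define A where "A r = Aset c1 c2 r s" for r
  define B where "B r = set (verified c1 c2 r s)" for r
  have A_Gb: "A r \<subseteq> {..<Gb}" for r using Aset_props[of c1 c2 r s] by (simp add: A_def Gb_def)
  have B_n: "B r \<subseteq> {..<n}" for r using verified_lt[of c1 c2 r s] nS by (simp add: B_def)
  have AB_n: "A r \<union> B r \<subseteq> {..<n}" for r using A_Gb[of r] B_n[of r] Gbn by auto
  have AB_disj: "A r \<inter> B r = {}" for r using verified_disj_Aset[of c1 c2 r s] by (auto simp: A_def B_def)
  have invA: "samep N r r' \<Longrightarrow> Gb \<le> N \<Longrightarrow> A r = A r'" for N r r'
    unfolding A_def Gb_def by (rule samep_Aset)
  have invB: "samep n r r' \<Longrightarrow> B r = B r'" for r r'
    unfolding B_def using samep_verified[of n r r' c1 c2 s] nS by simp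
  let ?P = "PiM {..<n} mu"
  let ?E = "PiM {..<Gb} mu"
  let ?F = "PiM {Gb..<n} mu"
  interpret P: prob_space ?P by (rule PiM_prob)
  interpret F: prob_space ?F by (rule PiM_prob)
  define E1 where "E1 = {x \<in> space ?P. \<forall>i\<in>A (sc x) \<union> B (sc x). \<not> snd (x i)}"
  define E2 where "E2 = {x \<in> space ?P. \<forall>i\<in>A (sc x). \<not> snd (x i)}"
  have ev1: "measure M {\<omega> \<in> space M. shell_fails c1 c2 (\<lambda>i. R i \<omega>) (\<lambda>i. V i \<omega>) s \<and> reaches c1 c2 (\<lambda>i. R i \<omega>) (\<lambda>i. V i \<omega>) s}
      = measure ?P E1"
  proof -
    have "measure M {\<omega> \<in> space M. shell_fails c1 c2 (\<lambda>i. R i \<omega>) (\<lambda>i. V i \<omega>) s \<and> reaches c1 c2 (\<lambda>i. R i \<omega>) (\<lambda>i. V i \<omega>) s}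
        = measure M {\<omega> \<in> space M. (\<lambda>r v. \<forall>i\<in>A r \<union> B r. \<not> v i) (\<lambda>i. R i \<omega>) (\<lambda>i. V i \<omega>)}"
      by (intro arg_cong[where f="measure M"] Collect_cong) (auto simp: reaches_iff shell_fails_def A_def B_def)
    also have "\<dots> = measure ?P {x \<in> space ?P. (\<lambda>r v. \<forall>i\<in>A r \<union> B r. \<not> v i) (sc x) (lb x)}"
    proof (rule event_transfer[OF npos])
      fix r r' :: "nat \<Rightarrow> real" and v v' :: "nat \<Rightarrow> bool"
      assume sp: "samep n r r'" and vv: "\<forall>i<n. v i = v' i"
      have "A r = A r'" using invA[OF sp Gbn] .
      moreover have "B r = B r'" using invB[OF sp] .
      ultimately show "(\<forall>i\<in>A r \<union> B r. \<not> v i) = (\<forall>i\<in>A r' \<union> B r'. \<not> v' i)"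
        using vv AB_n[of r] by auto
    qed
    finally show ?thesis by (simp add: E1_def lb_def)
  qed
  have ev2: "measure M {\<omega> \<in> space M. reaches c1 c2 (\<lambda>i. R i \<omega>) (\<lambda>i. V i \<omega>) s} = measure ?P E2"
  proof -
    have "measure M {\<omega> \<in> space M. reaches c1 c2 (\<lambda>i. R i \<omega>) (\<lambda>i. V i \<omega>) s}
        = measure M {\<omega> \<in> space M. (\<lambda>r v. \<forall>i\<in>A r. \<not> v i) (\<lambda>i. R i \<omega>) (\<lambda>i. V i \<omega>)}"
      by (intro arg_cong[where f="measure M"] Collect_cong) (auto simp: reaches_iff A_def)
    also have "\<dots> = measure ?P {x \<in> space ?P. (\<lambda>r v. \<forall>i\<in>A r. \<not> v i) (sc x) (lb x)}"
    proof (rule event_transfer[OF npos])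
      fix r r' :: "nat \<Rightarrow> real" and v v' :: "nat \<Rightarrow> bool"
      assume sp: "samep n r r'" and vv: "\<forall>i<n. v i = v' i"
      have "A r = A r'" using invA[OF sp Gbn] .
      moreover have "\<forall>i\<in>A r. i < n" using A_Gb[of r] Gbn by fastforce
      ultimately show "(\<forall>i\<in>A r. \<not> v i) = (\<forall>i\<in>A r'. \<not> v' i)"
        using vv by auto
    qed
    finally show ?thesis by (simp add: E2_def lb_def)
  qed
  define g where "g x = ennreal (\<Prod>i\<in>A (sc x). 1 - h (fst (x i)))" for x :: "nat \<Rightarrow> real \<times> bool"
  define Q where "Q x = ennreal (qf t h [Gb..<n] kk (sc x))" for x :: "nat \<Rightarrow> real \<times> bool"
  have invA': "samep Gb r r' \<Longrightarrow> A r = A r'" for r r' using invA by auto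
  have gmP: "g \<in> borel_measurable ?P"
    unfolding g_def by (rule setprod_meas[of Gb]) (use Gbn A_Gb invA' in auto)
  have gmE: "g \<in> borel_measurable ?E"
    unfolding g_def by (rule setprod_meas[of Gb]) (use A_Gb invA' in auto)
  have QmP: "Q \<in> borel_measurable ?P"
    unfolding Q_def by (intro measurable_compose[OF _ measurable_ennreal] qf_meas) auto
  have QmF: "Q \<in> borel_measurable ?F"
    unfolding Q_def by (intro measurable_compose[OF _ measurable_ennreal] qf_meas) auto
  have inv1: "(\<forall>i\<in>A r \<union> B r. \<not> v i) = (\<forall>i\<in>A r' \<union> B r'. \<not> v' i)"
    if sp: "samep n r r'" and vv: "\<forall>i<n. v i = v' i" for r r' v v'
  proof -
    have "A r = A r'" using invA[OF sp Gbn] .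
    moreover have "B r = B r'" using invB[OF sp] .
    ultimately show ?thesis using vv AB_n[of r] by auto
  qed
  have inv2: "(\<forall>i\<in>A r. \<not> v i) = (\<forall>i\<in>A r'. \<not> v' i)"
    if sp: "samep n r r'" and vv: "\<forall>i<n. v i = v' i" for r r' v v'
  proof -
    have "A r = A r'" using invA[OF sp Gbn] .
    moreover have "\<forall>i\<in>A r. i < n" using A_Gb[of r] Gbn by fastforce
    ultimately show ?thesis using vv by auto
  qed
  have E1s: "E1 \<in> sets ?P"
    unfolding E1_def using pattern_sets[OF subset_refl, of n "\<lambda>r v. \<forall>i\<in>A r \<union> B r. \<not> v i", OF inv1]
    by (simp add: lb_def)
  have E2s: "E2 \<in> sets ?P"
    unfolding E2_def using pattern_sets[OF subset_refl, of n "\<lambda>r v. \<forall>i\<in>A r. \<not> v i", OF inv2]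
    by (simp add: lb_def)
  have em1: "emeasure ?P E1 = (\<integral>\<^sup>+x. ennreal (\<Prod>i\<in>A (sc x) \<union> B (sc x). 1 - h (fst (x i))) \<partial>?P)"
  proof -
    have "emeasure ?P E1 = (\<integral>\<^sup>+x. indicator E1 x \<partial>?P)" using E1s by simp
    also have "\<dots> = (\<integral>\<^sup>+x. ennreal (\<Prod>i\<in>A (sc x) \<union> B (sc x). 1 - h (fst (x i))) \<partial>?P)"
      unfolding E1_def by (rule label_elim_set[of _ n]) (use AB_n invA[OF _ Gbn] invB in auto)
    finally show ?thesis .
  qed
  have em2: "emeasure ?P E2 = (\<integral>\<^sup>+x. g x \<partial>?P)"
  proof -
    have "emeasure ?P E2 = (\<integral>\<^sup>+x. indicator E2 x \<partial>?P)" using E2s by simp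
    also have "\<dots> = (\<integral>\<^sup>+x. g x \<partial>?P)"
      unfolding E2_def g_def by (rule label_elim_set[of _ Gb]) (use A_Gb invA' Gbn in auto)
    finally show ?thesis .
  qed
  have pw: "ennreal (\<Prod>i\<in>A (sc x) \<union> B (sc x). 1 - h (fst (x i))) \<le> g x * Q x" for x
  proof -
    let ?r = "sc x"
    have fA: "finite (A ?r)" by (rule finite_subset[OF A_Gb finite_lessThan])
    have fB: "finite (B ?r)" by (rule finite_subset[OF B_n finite_lessThan])
    have sp: "(\<Prod>i\<in>A ?r \<union> B ?r. 1 - h (fst (x i))) = (\<Prod>i\<in>A ?r. 1 - h (fst (x i))) * (\<Prod>i\<in>B ?r. 1 - h (fst (x i)))"
      by (rule prod.union_disjoint[OF fA fB AB_disj])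
    have Bdef: "B ?r = set (take kk (sort_key (\<lambda>i. - ?r i) (pool_before c1 c2 ?r s @ [Gb..<Gb + m])))"
      using ne by (simp add: B_def verified_def kk_def Gb_def m_def)
    have pp: "set (pool_before c1 c2 ?r s) \<subseteq> {..<Gb}" "distinct (pool_before c1 c2 ?r s)"
      using pool_props[of c1 c2 ?r s] by (auto simp: Gb_def)
    have dx: "distinct (pool_before c1 c2 ?r s @ [Gb..<Gb + m])" using pp by auto
    have dom: "(\<Prod>i\<in>B ?r. 1 - h (?r i)) \<le> qf t h [Gb..<Gb + m] kk ?r"
      unfolding Bdef by (rule dominate[OF h_mono h_range dx]) auto
    have "(\<Prod>i\<in>B ?r. 1 - h (fst (x i))) \<le> qf t h [Gb..<n] kk ?r"
      using dom by (simp add: sc_def n_def)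
    moreover have "0 \<le> (\<Prod>i\<in>A ?r. 1 - h (fst (x i)))" "0 \<le> (\<Prod>i\<in>B ?r. 1 - h (fst (x i)))"
      using h_range by (auto intro!: prod_nonneg simp: algebra_simps)
    ultimately have "(\<Prod>i\<in>A ?r. 1 - h (fst (x i))) * (\<Prod>i\<in>B ?r. 1 - h (fst (x i)))
        \<le> (\<Prod>i\<in>A ?r. 1 - h (fst (x i))) * qf t h [Gb..<n] kk ?r"
      by (intro mult_left_mono) auto
    then have "ennreal ((\<Prod>i\<in>A ?r. 1 - h (fst (x i))) * (\<Prod>i\<in>B ?r. 1 - h (fst (x i))))
        \<le> ennreal ((\<Prod>i\<in>A ?r. 1 - h (fst (x i))) * qf t h [Gb..<n] kk ?r)"
      by (rule ennreal_leI)
    also have "\<dots> = g x * Q x"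
      using qf_01[of h t "[Gb..<n]" kk ?r] h_range by (simp add: g_def Q_def ennreal_mult'')
    finally show ?thesis by (simp add: sp)
  qed
  have un: "{..<n} = {..<Gb} \<union> {Gb..<n}" using Gbn by auto
  have dj: "{..<Gb} \<inter> {Gb..<n} = {}" by auto
  have g_merge: "g (merge {..<Gb} {Gb..<n} (x, y)) = g x" for x y
  proof -
    let ?z = "merge {..<Gb} {Gb..<n} (x, y)"
    have zx: "?z i = x i" if "i < Gb" for i using that by (simp add: merge_def)
    have "samep Gb (sc ?z) (sc x)" by (auto simp: samep_def sc_def zx)
    then have "A (sc ?z) = A (sc x)" by (rule invA')
    moreover have "fst (?z i) = fst (x i)" if "i \<in> A (sc x)" for i
    proof -
      have "i < Gb" using A_Gb[of "sc x"] that by blast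
      then show ?thesis by (simp add: zx)
    qed
    ultimately show ?thesis unfolding g_def by (auto intro!: arg_cong[where f=ennreal] prod.cong)
  qed
  have Q_merge: "Q (merge {..<Gb} {Gb..<n} (x, y)) = Q y" for x y
    unfolding Q_def by (intro arg_cong[where f=ennreal] qf_cong) (auto simp: sc_def merge_def)
  have gQm: "(\<lambda>x. g x * Q x) \<in> borel_measurable (PiM ({..<Gb} \<union> {Gb..<n}) mu)"
    unfolding un[symmetric] using gmP QmP by (rule borel_measurable_times_ennreal)
  have gm': "g \<in> borel_measurable (PiM ({..<Gb} \<union> {Gb..<n}) mu)" unfolding un[symmetric] by (rule gmP)
  have "(\<integral>\<^sup>+x. g x * Q x \<partial>?P) = (\<integral>\<^sup>+x. g x * Q x \<partial>PiM ({..<Gb} \<union> {Gb..<n}) mu)"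
    by (simp only: un[symmetric])
  also have "\<dots> = (\<integral>\<^sup>+x. (\<integral>\<^sup>+y. g (merge {..<Gb} {Gb..<n} (x, y)) * Q (merge {..<Gb} {Gb..<n} (x, y)) \<partial>?F) \<partial>?E)"
    by (rule product_sigma_finite.product_nn_integral_fold[OF psf' dj _ _ gQm]) auto
  also have "\<dots> = (\<integral>\<^sup>+x. g x * (\<integral>\<^sup>+y. Q y \<partial>?F) \<partial>?E)"
    by (simp add: g_merge Q_merge nn_integral_cmult[OF QmF])
  also have "\<dots> = (\<integral>\<^sup>+x. g x \<partial>?E) * (\<integral>\<^sup>+y. Q y \<partial>?F)"
    by (rule nn_integral_multc[OF gmE])
  finally have fold1: "(\<integral>\<^sup>+x. g x * Q x \<partial>?P) = (\<integral>\<^sup>+x. g x \<partial>?E) * (\<integral>\<^sup>+y. Q y \<partial>?F)" .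
  have "(\<integral>\<^sup>+x. g x \<partial>?P) = (\<integral>\<^sup>+x. g x \<partial>PiM ({..<Gb} \<union> {Gb..<n}) mu)"
    by (simp only: un[symmetric])
  also have "\<dots> = (\<integral>\<^sup>+x. (\<integral>\<^sup>+y. g (merge {..<Gb} {Gb..<n} (x, y)) \<partial>?F) \<partial>?E)"
    by (rule product_sigma_finite.product_nn_integral_fold[OF psf' dj _ _ gm']) auto
  also have "\<dots> = (\<integral>\<^sup>+x. g x \<partial>?E)"
    by (simp add: g_merge F.emeasure_space_1)
  finally have fold2: "(\<integral>\<^sup>+x. g x \<partial>?P) = (\<integral>\<^sup>+x. g x \<partial>?E)" .
  have Qb: "(\<integral>\<^sup>+y. Q y \<partial>?F) \<le> ennreal Bnd"
  proof -
    have "(\<integral>\<^sup>+y. Q y \<partial>PiM (set [Gb..<n]) mu) \<le> ennreal ((1 - (LINT r:{t..}|D. h r)) ^ length [Gb..<n] + (1 - (LINT r:{t..}|D. h r) / measure D {t..}) ^ kk)"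
      unfolding Q_def by (rule qf_int[OF qpos]) simp
    then show ?thesis by (simp add: Bnd_def n_def)
  qed
  have "emeasure ?P E1 \<le> (\<integral>\<^sup>+x. g x * Q x \<partial>?P)"
    unfolding em1 by (intro nn_integral_mono pw)
  also have "\<dots> = (\<integral>\<^sup>+x. g x \<partial>?E) * (\<integral>\<^sup>+y. Q y \<partial>?F)" by (rule fold1)
  also have "\<dots> \<le> (\<integral>\<^sup>+x. g x \<partial>?E) * ennreal Bnd" by (intro mult_left_mono Qb) auto
  also have "\<dots> = ennreal Bnd * emeasure ?P E2" by (simp add: em2 fold2 mult.commute)
  finally have "ennreal (measure ?P E1) \<le> ennreal (Bnd * measure ?P E2)"
    using Bnd0 by (simp add: P.emeasure_eq_measure ennreal_mult)
  then have "measure ?P E1 \<le> Bnd * measure ?P E2"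
    using Bnd0 by (simp add: ennreal_le_iff)
  then show ?thesis unfolding ev1 ev2 by (simp add: Bnd_def m_def kk_def)
qed

end



lemma shell_sub:
  assumes c1: "c1 > 0" and c2: "c2 > 0"
  shows "shell c1 c2 s \<subseteq> {..s} \<times> {..s}"
proof
  fix p assume p: "p \<in> shell c1 c2 s"
  obtain a' b' where ab: "p = (a', b')" by (cases p)
  have le: "a' \<le> b'" and lt: "c1 * 2 ^ b' + c2 * 2 ^ (b' - a') < 2 ^ (s + 1) * min c1 c2"
    using p ab by (auto simp: shell_def)
  have "c1 * 2 ^ b' < 2 ^ (s + 1) * c1"
  proof -
    have "c1 * 2 ^ b' \<le> c1 * 2 ^ b' + c2 * 2 ^ (b' - a')" using c2 by simp
    also have "\<dots> < 2 ^ (s + 1) * min c1 c2" by (rule lt)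
    also have "\<dots> \<le> 2 ^ (s + 1) * c1" by (intro mult_left_mono) auto
    finally show ?thesis .
  qed
  then have "(2::real) ^ b' < 2 ^ (s + 1)" using c1 by (simp add: mult.commute)
  then have "b' < s + 1" by (metis one_less_numeral_iff power_strict_increasing_iff semiring_norm(76))
  then show "p \<in> {..s} \<times> {..s}" using ab le by auto
qed

lemma shell_finite: "c1 > 0 \<Longrightarrow> c2 > 0 \<Longrightarrow> finite (shell c1 c2 s)"
  using shell_sub by (metis finite_SigmaI finite_atMost finite_subset)

lemma shell_shift:
  assumes "(a, b) \<in> shell c1 c2 s"
  shows "(a, b + u) \<in> shell c1 c2 (s + u)"
proof -
  have ab: "a \<le> b" and lo: "2 ^ s * min c1 c2 \<le> c1 * 2 ^ b + c2 * 2 ^ (b - a)"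
    and hi: "c1 * 2 ^ b + c2 * 2 ^ (b - a) < 2 ^ (s + 1) * min c1 c2"
    using assms by (auto simp: shell_def)
  have bu: "b + u - a = (b - a) + u" using ab by simp
  have cost: "c1 * 2 ^ (b + u) + c2 * 2 ^ (b + u - a) = 2 ^ u * (c1 * 2 ^ b + c2 * 2 ^ (b - a))"
    unfolding bu by (simp add: power_add algebra_simps)
  have "2 ^ (s + u) * min c1 c2 = 2 ^ u * (2 ^ s * min c1 c2)" by (simp add: power_add algebra_simps)
  also have "\<dots> \<le> 2 ^ u * (c1 * 2 ^ b + c2 * 2 ^ (b - a))" using lo by (intro mult_left_mono) auto
  finally have lo': "2 ^ (s + u) * min c1 c2 \<le> c1 * 2 ^ (b + u) + c2 * 2 ^ (b + u - a)" using cost by simp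
  have "c1 * 2 ^ (b + u) + c2 * 2 ^ (b + u - a) = 2 ^ u * (c1 * 2 ^ b + c2 * 2 ^ (b - a))" by (rule cost)
  also have "\<dots> < 2 ^ u * (2 ^ (s + 1) * min c1 c2)" using hi by (intro mult_strict_left_mono) auto
  also have "\<dots> = 2 ^ (s + u + 1) * min c1 c2" by (simp add: power_add algebra_simps)
  finally show ?thesis using ab lo' by (simp add: shell_def)
qed

lemma pow_exp: "0 \<le> x \<Longrightarrow> x \<le> 1 \<Longrightarrow> (1 - x :: real) ^ n \<le> exp (- (x * n))"
proof -
  assume x: "0 \<le> x" "x \<le> 1"
  have "(1 - x) ^ n \<le> exp (- x) ^ n"
    using x exp_ge_add_one_self[of "- x"] by (intro power_mono) auto
  also have "\<dots> = exp (- (x * n))" by (simp add: exp_of_nat_mult[symmetric] mult.commute)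
  finally show ?thesis .
qed

theorem lemma7:
  fixes M :: "'w measure" and D :: "real measure" and h :: "real \<Rightarrow> real"
    and R :: "nat \<Rightarrow> 'w \<Rightarrow> real" and V :: "nat \<Rightarrow> 'w \<Rightarrow> bool"
    and crew cver t :: real and a b sstar u :: nat
  assumes "prob_space M"
    and h_meas: "h \<in> borel_measurable borel"
    and h_range: "\<And>r. 0 \<le> h r \<and> h r \<le> 1"
    and h_mono: "mono h"
    and indep: "prob_space.indep_vars M (\<lambda>_. borel \<Otimes>\<^sub>M count_space UNIV)
                  (\<lambda>i \<omega>. (R i \<omega>, V i \<omega>)) UNIV"
    and distR: "\<And>i. distr M borel (R i) = D"
    and condV: "\<And>i A. A \<in> sets borel \<Longrightarrow>
                  measure M {\<omega> \<in> space M. R i \<omega> \<in> A \<and> V i \<omega>} = (LINT r:A|D. h r)"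
    and "crew > 0" and "cver > 0"
    and qpos: "measure D {t..} > 0"
    and spos: "(LINT r:{t..}|D. h r) > 0"
    and dyad_a: "1 / 2 ^ (a + 1) < measure D {t..} \<and> measure D {t..} \<le> 1 / 2 ^ a"
    and dyad_b: "1 / 2 ^ b \<le> (LINT r:{t..}|D. h r) \<and> (LINT r:{t..}|D. h r) < 2 / 2 ^ b"
    and shell_star: "(a, b) \<in> shell crew cver sstar"
  shows "cond_prob M
           (\<lambda>\<omega>. shell_fails crew cver (\<lambda>i. R i \<omega>) (\<lambda>i. V i \<omega>) (sstar + u))
           (\<lambda>\<omega>. reaches crew cver (\<lambda>i. R i \<omega>) (\<lambda>i. V i \<omega>) (sstar + u))
         \<le> exp (- (2 ^ (u + 1))) + exp (- (2 ^ u))"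
proof -
  interpret A: asrch M D h R V
    using assms(1) h_meas h_range h_mono indep distR condV
    by (simp add: asrch_def asrch_axioms_def)
  define s where "s = sstar + u"
  define q where "q = measure D {t..}"
  define sI where "sI = (LINT r:{t..}|D. h r)"
  have c1: "crew > 0" and c2: "cver > 0" using assms by auto
  have mem: "(a, b + u) \<in> shell crew cver s" unfolding s_def by (rule shell_shift[OF shell_star])
  have ab: "a \<le> b" using shell_star by (simp add: shell_def)
  have ne: "shell crew cver s \<noteq> {}" using mem by auto
  have fin: "finite (shell crew cver s)" by (rule shell_finite[OF c1 c2])
  have bst: "b + u \<le> bstar crew cver s"
    unfolding bstar_def using mem fin by (intro Max_ge) (auto intro: rev_image_eqI)
  have jst: "b + u - a \<le> jstar crew cver s"
    unfolding jstar_def using mem fin by (intro Max_ge) (auto intro: rev_image_eqI[of "(a, b + u)"])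
  have mb: "real (m_gen crew cver s) \<ge> 2 ^ (b + u + 1)"
  proof -
    have "(2::real) ^ (b + u + 1) \<le> 2 ^ (bstar crew cver s + 1)" using bst by (intro power_increasing) auto
    also have "\<dots> \<le> real (nat \<lceil>(2::real) ^ (bstar crew cver s + 1)\<rceil>)" by (rule real_nat_ceiling_ge)
    finally show ?thesis by (simp add: m_gen_def)
  qed
  have kb: "real (k_ver crew cver s) \<ge> 6 * 2 ^ (b + u - a)"
  proof -
    have "6 * (2::real) ^ (b + u - a) \<le> 6 * 2 ^ jstar crew cver s" using jst by (intro mult_left_mono power_increasing) auto
    also have "\<dots> \<le> real (nat \<lceil>6 * (2::real) ^ jstar crew cver s\<rceil>)" by (rule real_nat_ceiling_ge)
    finally show ?thesis by (simp add: k_ver_def)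
  qed
  have bnds: "0 \<le> sI" "sI \<le> q" "q \<le> 1" using A.sI_bounds[of t] by (auto simp: q_def sI_def)
  have qp: "0 < q" using qpos by (simp add: q_def)
  have sIb: "1 / 2 ^ b \<le> sI" using dyad_b by (simp add: sI_def)
  have qb: "q \<le> 1 / 2 ^ a" using dyad_a by (simp add: q_def)
  have X: "(1 - sI) ^ m_gen crew cver s \<le> exp (- (2 ^ (u + 1)))"
  proof -
    have "(1 - sI) ^ m_gen crew cver s \<le> exp (- (sI * m_gen crew cver s))"
      using bnds by (intro pow_exp) auto
    also have "\<dots> \<le> exp (- (2 ^ (u + 1)))"
    proof -
      have "(2::real) ^ (u + 1) = (1 / 2 ^ b) * 2 ^ (b + u + 1)" by (simp add: power_add)
      also have "\<dots> \<le> sI * m_gen crew cver s" using sIb mb bnds by (intro mult_mono) auto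
      finally show ?thesis by simp
    qed
    finally show ?thesis .
  qed
  have Y: "(1 - sI / q) ^ k_ver crew cver s \<le> exp (- (2 ^ u))"
  proof -
    have r01: "0 \<le> sI / q" "sI / q \<le> 1" using bnds qp by (auto simp: field_simps)
    have "(1 - sI / q) ^ k_ver crew cver s \<le> exp (- (sI / q * k_ver crew cver s))"
      using r01 by (intro pow_exp) auto
    also have "\<dots> \<le> exp (- (2 ^ u))"
    proof -
      have d: "sI / (1 / 2 ^ a) \<le> sI / q" using qb qp bnds by (intro divide_left_mono) auto
      have "(2::real) ^ a / 2 ^ b = (1 / 2 ^ b) * 2 ^ a" by simp
      also have "\<dots> \<le> sI * 2 ^ a" using sIb by (intro mult_right_mono) auto
      also have "\<dots> = sI / (1 / 2 ^ a)" by simp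
      finally have r: "2 ^ a / 2 ^ b \<le> sI / q" using d by linarith
      have "(2::real) ^ u \<le> 6 * 2 ^ u" by simp
      also have "6 * (2::real) ^ u = (2 ^ a / 2 ^ b) * (6 * 2 ^ (b + u - a))"
      proof -
        have "(2::real) ^ (b + u - a) * 2 ^ a = 2 ^ (b + u)" using ab by (simp add: power_add[symmetric])
        then show ?thesis by (simp add: field_simps power_add)
      qed
      also have "\<dots> \<le> sI / q * k_ver crew cver s" using r kb r01 by (intro mult_mono) auto
      finally show ?thesis by simp
    qed
    finally show ?thesis .
  qed
  define pr1 where "pr1 = measure M {\<omega> \<in> space M. shell_fails crew cver (\<lambda>i. R i \<omega>) (\<lambda>i. V i \<omega>) s \<and> reaches crew cver (\<lambda>i. R i \<omega>) (\<lambda>i. V i \<omega>) s}"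
  define pr2 where "pr2 = measure M {\<omega> \<in> space M. reaches crew cver (\<lambda>i. R i \<omega>) (\<lambda>i. V i \<omega>) s}"
  have main: "pr1 \<le> ((1 - sI) ^ m_gen crew cver s + (1 - sI / q) ^ k_ver crew cver s) * pr2"
    unfolding pr1_def pr2_def q_def sI_def by (rule A.main_bound[OF ne qpos])
  have pr2nn: "0 \<le> pr2" by (simp add: pr2_def)
  have "pr1 \<le> (exp (- (2 ^ (u + 1))) + exp (- (2 ^ u))) * pr2"
    using main X Y pr2nn by (meson add_mono mult_right_mono order_trans)
  then have "pr1 / pr2 \<le> exp (- (2 ^ (u + 1))) + exp (- (2 ^ u))"
    using pr2nn by (cases "pr2 = 0") (auto simp: divide_le_eq)
  then show ?thesis by (simp add: cond_prob_def pr1_def pr2_def s_def)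
qed


end
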